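(* Let $C_2$ be the 2-chain and $W$ the wedge poset. Then $[C_2\odot W]'=\{S_3|_{1,2}\}$: the only poset $P$ with $P\oslash' W\cong C_2$ and $P\not\cong C_2$ is the poset $S_3|_{1,2}$.
   Context: $C_2=\{x<y\}$. The wedge $W$ is the 3-element poset $\{x,y,z\}$ with $x<z$, $y<z$ (two minimal elements below one maximal element). $S_3|_{1,2}$ is the 10-element poset consisting of the six 2-element subsets and the four 3-element subsets of $\{1,2,3,4\}$, ordered by inclusion (the edges and 2-faces of a tetrahedron). Notation for a poset $P$: $J^-(a)=\{c:c\le a\}$, $J^+(a)=\{c:a\le c\}$; $\ell(X)$ is the cardinality of a longest chain of a poset $X$. A subset $A$ of a poset $X$ is maximally ordered in $X$ if $|\{(a,b)\in A\times A:a<b\}|$ is maximal among subsets of $X$ of cardinality $|A|$. $A\subseteq P$ is linked if for all $a<b$ in $A$, either $b$ covers $a$ or there exists $c\in J^+(a)\cap J^-(b)$ with $c\in A$. For $\sigma\in\mathrm{Aut}(P)$, $\Sigma(\sigma)=\{a:\sigma(a)\ne a\}$. For finite $Q$ and $r\ge2$: $\sigma$ is a $(Q,r)$-generator if there exist subsets $S_0,\dots,S_{r-1}\subset\Sigma(\sigma)$, each isomorphic to $Q$, which are smallest maximally ordered subsets of $\Sigma(\sigma)$ with $\sigma(S_i)=S_{(i+1)\bmod r}$, $\ell(S_i)=\ell(\Sigma(\sigma))$, $\bigcup_iS_i=\Sigma(\sigma)$; distinct $S_i,S_j$ are $(Q,r)$-symmetric subsets. Elements $a,b$ are $(Q,r,0)$-symmetric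 if $a=b$; $(Q,r,1)$-symmetric if there are $(Q,r)$-symmetric subsets $A,B$ with generator $\sigma$, $a\in A$, $b=\sigma^q(a)\in B$, $1\le q<r$; for $n\ge2$, $(Q,r,n)$-symmetric if not $(Q,r,j)$-symmetric for $j<n$ but there exist $c$, $j<n$ with $a$ $(Q,r,j)$-symmetric to $c$ and $c$ $(Q,r,n-j)$-symmetric to $b$; $(Q,r)$-symmetric if $(Q,r,n)$-symmetric for some $n\ge0$ (an equivalence relation). $P\oslash_rQ$ is the quotient poset of equivalence classes with $E\le F$ iff some $e\in E$, $f\in F$ satisfy $e\le f$. For a linked subset $A\cong Q$, the $(Q,r)$-symmetry group of $A$ is the largest subgroup of $\mathrm{Aut}(P)$ of $(Q,r)$-generators whose action fixes every $b\in P$ to which no $a\in A$ is $(Q,r)$-symmetric; the $(Q,r)$-symmetry set of $A$ is the set of elements not fixed by this group. The symmetry of a $(Q,r)$-symmetry set $S$ is composite if there exist a finite poset $\hat Q$, $\hat r\ge2$ and a $(\hat Q,\hat r)$-symmetry set $\hat S\subseteq S$ with either $\hat Q$ a proper subposet of $Q$, or $\hat Q=Q$ and $\hat r<r$; prime otherwise. $P\oslash'_rQ$ is the retraction using only prime $(Q,r)$-symmetries, and $[R\odot_rQ]'=\{P:P\oslash'_rQ\cong R,\ P\not\cong R\}$; for $r=2$ the index is dropped. *)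

theory Defs
  imports Main
begin

definition poset :: "'a set \<Rightarrow> ('a \<Rightarrow> 'a \<Rightarrow> bool) \<Rightarrow> bool" where
  "poset A le \<longleftrightarrow> (\<forall>x\<in>A. le x x)
     \<and> (\<forall>x\<in>A. \<forall>y\<in>A. le x y \<and> le y x \<longrightarrow> x = y)
     \<and> (\<forall>x\<in>A. \<forall>y\<in>A. \<forall>z\<in>A. le x y \<and> le y z \<longrightarrow> le x z)"

definition less_in :: "('a \<Rightarrow> 'a \<Rightarrow> bool) \<Rightarrow> 'a \<Rightarrow> 'a \<Rightarrow> bool" where
  "less_in le a b \<longleftrightarrow> le a b \<and> a \<noteq> b"

definition poset_iso :: "'a set \<Rightarrow> ('a \<Rightarrow> 'a \<Rightarrow> bool) \<Rightarrow> 'b set \<Rightarrow> ('b \<Rightarrow> 'b \<Rightarrow> bool) \<Rightarrow> bool" where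
  "poset_iso A le B le' \<longleftrightarrow>
     (\<exists>f. bij_betw f A B \<and> (\<forall>x\<in>A. \<forall>y\<in>A. le x y \<longleftrightarrow> le' (f (x)) (f y)))"

definition aut :: "'a set \<Rightarrow> ('a \<Rightarrow> 'a \<Rightarrow> bool) \<Rightarrow> ('a \<Rightarrow> 'a) \<Rightarrow> bool" where
  "aut P le \<sigma> \<longleftrightarrow> bij_betw \<sigma> P P \<and> (\<forall>x\<in>P. \<forall>y\<in>P. le x y \<longleftrightarrow> le (\<sigma> x) (\<sigma> y))
     \<and> (\<forall>x. x \<notin> P \<longrightarrow> \<sigma> x = x)"

definition moved :: "'a set \<Rightarrow> ('a \<Rightarrow> 'a) \<Rightarrow> 'a set" where
  "moved P \<sigma> = {a \<in> P. \<sigma> a \<noteq> a}"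

definition is_chain :: "('a \<Rightarrow> 'a \<Rightarrow> bool) \<Rightarrow> 'a set \<Rightarrow> bool" where
  "is_chain le C \<longleftrightarrow> (\<forall>x\<in>C. \<forall>y\<in>C. le x y \<or> le y x)"

definition height :: "('a \<Rightarrow> 'a \<Rightarrow> bool) \<Rightarrow> 'a set \<Rightarrow> nat" where
  "height le X = Max {card C | C. C \<subseteq> X \<and> is_chain le C}"

definition n_ord :: "('a \<Rightarrow> 'a \<Rightarrow> bool) \<Rightarrow> 'a set \<Rightarrow> nat" where
  "n_ord le A = card {(a, b). a \<in> A \<and> b \<in> A \<and> less_in le a b}"

definition max_ordered :: "('a \<Rightarrow> 'a \<Rightarrow> bool) \<Rightarrow> 'a set \<Rightarrow> 'a set \<Rightarrow> bool" where
  "max_ordered le X A \<longleftrightarrow> A \<subseteq> X \<and>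
     (\<forall>B. B \<subseteq> X \<and> card B = card A \<longrightarrow> n_ord le B \<le> n_ord le A)"

definition covers :: "'a set \<Rightarrow> ('a \<Rightarrow> 'a \<Rightarrow> bool) \<Rightarrow> 'a \<Rightarrow> 'a \<Rightarrow> bool" where
  "covers P le a b \<longleftrightarrow> less_in le a b \<and> \<not> (\<exists>c\<in>P. less_in le a c \<and> less_in le c b)"

definition linked :: "'a set \<Rightarrow> ('a \<Rightarrow> 'a \<Rightarrow> bool) \<Rightarrow> 'a set \<Rightarrow> bool" where
  "linked P le A \<longleftrightarrow> (\<forall>a\<in>A. \<forall>b\<in>A. less_in le a b \<longrightarrow>
      covers P le a b \<or> (\<exists>c\<in>A. less_in le a c \<and> less_in le c b))"

text \<open>The structural conditions on a family S_0..S_{r-1} for \<sigma> (without the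
  isomorphism type and without minimality).\<close>
definition gen_family :: "'a set \<Rightarrow> ('a \<Rightarrow> 'a \<Rightarrow> bool) \<Rightarrow> nat \<Rightarrow> ('a \<Rightarrow> 'a) \<Rightarrow> (nat \<Rightarrow> 'a set) \<Rightarrow> bool" where
  "gen_family P le r \<sigma> S \<longleftrightarrow>
     (\<forall>i<r. S i \<subseteq> moved P \<sigma>
        \<and> max_ordered le (moved P \<sigma>) (S i)
        \<and> \<sigma> ` (S i) = S ((i + 1) mod r)
        \<and> height le (S i) = height le (moved P \<sigma>))
     \<and> (\<Union>i<r. S i) = moved P \<sigma>"

definition generator_fam :: "'a set \<Rightarrow> ('a \<Rightarrow> 'a \<Rightarrow> bool) \<Rightarrow> 'q set \<Rightarrow> ('q \<Rightarrow> 'q \<Rightarrow> bool)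
     \<Rightarrow> nat \<Rightarrow> ('a \<Rightarrow> 'a) \<Rightarrow> (nat \<Rightarrow> 'a set) \<Rightarrow> bool" where
  "generator_fam P le Q qle r \<sigma> S \<longleftrightarrow>
     aut P le \<sigma> \<and> 2 \<le> r \<and> gen_family P le r \<sigma> S
     \<and> (\<forall>i<r. poset_iso (S i) le Q qle)
     \<and> (\<forall>T. gen_family P le r \<sigma> T \<longrightarrow> (\<forall>i<r. card (S i) \<le> card (T i)))"

definition is_generator :: "'a set \<Rightarrow> ('a \<Rightarrow> 'a \<Rightarrow> bool) \<Rightarrow> 'q set \<Rightarrow> ('q \<Rightarrow> 'q \<Rightarrow> bool)
     \<Rightarrow> nat \<Rightarrow> ('a \<Rightarrow> 'a) \<Rightarrow> bool" where
  "is_generator P le Q qle r \<sigma> \<longleftrightarrow> (\<exists>S. generator_fam P le Q qle r \<sigma> S)"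

definition sym_step :: "'a set \<Rightarrow> ('a \<Rightarrow> 'a \<Rightarrow> bool) \<Rightarrow> 'q set \<Rightarrow> ('q \<Rightarrow> 'q \<Rightarrow> bool)
     \<Rightarrow> nat \<Rightarrow> ('a \<Rightarrow> 'a) \<Rightarrow> 'a \<Rightarrow> 'a \<Rightarrow> bool" where
  "sym_step P le Q qle r \<sigma> a b \<longleftrightarrow>
     (\<exists>S i j q. generator_fam P le Q qle r \<sigma> S \<and> i < r \<and> j < r \<and> S i \<noteq> S j
        \<and> a \<in> S i \<and> b \<in> S j \<and> 1 \<le> q \<and> q < r \<and> b = (\<sigma> ^^ q) a)"

definition sym1 :: "'a set \<Rightarrow> ('a \<Rightarrow> 'a \<Rightarrow> bool) \<Rightarrow> 'q set \<Rightarrow> ('q \<Rightarrow> 'q \<Rightarrow> bool)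
     \<Rightarrow> nat \<Rightarrow> 'a \<Rightarrow> 'a \<Rightarrow> bool" where
  "sym1 P le Q qle r a b \<longleftrightarrow> (\<exists>\<sigma>. sym_step P le Q qle r \<sigma> a b)"

definition symrel :: "'a set \<Rightarrow> ('a \<Rightarrow> 'a \<Rightarrow> bool) \<Rightarrow> 'q set \<Rightarrow> ('q \<Rightarrow> 'q \<Rightarrow> bool)
     \<Rightarrow> nat \<Rightarrow> 'a \<Rightarrow> 'a \<Rightarrow> bool" where
  "symrel P le Q qle r = (sup (sym1 P le Q qle r) (conversep (sym1 P le Q qle r)))\<^sup>*\<^sup>*"

inductive_set gen_closure :: "('a \<Rightarrow> 'a) set \<Rightarrow> ('a \<Rightarrow> 'a) set" for G where
  gc_id: "id \<in> gen_closure G"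
| gc_comp: "\<sigma> \<in> G \<Longrightarrow> \<tau> \<in> gen_closure G \<Longrightarrow> \<sigma> \<circ> \<tau> \<in> gen_closure G"

definition adm_gens :: "'a set \<Rightarrow> ('a \<Rightarrow> 'a \<Rightarrow> bool) \<Rightarrow> 'q set \<Rightarrow> ('q \<Rightarrow> 'q \<Rightarrow> bool)
     \<Rightarrow> nat \<Rightarrow> 'a set \<Rightarrow> ('a \<Rightarrow> 'a) set" where
  "adm_gens P le Q qle r A = {\<sigma>. is_generator P le Q qle r \<sigma> \<and>
      (\<forall>b\<in>P. \<not> (\<exists>a\<in>A. symrel P le Q qle r a b) \<longrightarrow> \<sigma> b = b)}"

text \<open>The (Q,r)-symmetry group of A (subgroup of Aut(P) generated by the admissible
  generators; finite permutation group, so closure under composition suffices).\<close>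
definition sym_group :: "'a set \<Rightarrow> ('a \<Rightarrow> 'a \<Rightarrow> bool) \<Rightarrow> 'q set \<Rightarrow> ('q \<Rightarrow> 'q \<Rightarrow> bool)
     \<Rightarrow> nat \<Rightarrow> 'a set \<Rightarrow> ('a \<Rightarrow> 'a) set" where
  "sym_group P le Q qle r A = gen_closure (adm_gens P le Q qle r A)"

definition sym_set :: "'a set \<Rightarrow> ('a \<Rightarrow> 'a \<Rightarrow> bool) \<Rightarrow> 'q set \<Rightarrow> ('q \<Rightarrow> 'q \<Rightarrow> bool)
     \<Rightarrow> nat \<Rightarrow> 'a set \<Rightarrow> 'a set" where
  "sym_set P le Q qle r A = {x \<in> P. \<exists>g\<in>sym_group P le Q qle r A. g x \<noteq> x}"

definition is_sym_set :: "'a set \<Rightarrow> ('a \<Rightarrow> 'a \<Rightarrow> bool) \<Rightarrow> 'q set \<Rightarrow> ('q \<Rightarrow> 'q \<Rightarrow> bool)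
     \<Rightarrow> nat \<Rightarrow> 'a set \<Rightarrow> bool" where
  "is_sym_set P le Q qle r S \<longleftrightarrow>
     (\<exists>A. A \<subseteq> P \<and> linked P le A \<and> poset_iso A le Q qle \<and> S = sym_set P le Q qle r A)"

definition composite :: "'a set \<Rightarrow> ('a \<Rightarrow> 'a \<Rightarrow> bool) \<Rightarrow> 'q set \<Rightarrow> ('q \<Rightarrow> 'q \<Rightarrow> bool)
     \<Rightarrow> nat \<Rightarrow> 'a set \<Rightarrow> bool" where
  "composite P le Q qle r S \<longleftrightarrow>
     (\<exists>Q' r' S'. Q' \<subseteq> Q \<and> 2 \<le> r' \<and> S' \<noteq> {} \<and> S' \<subseteq> S
        \<and> is_sym_set P le Q' qle r' S'
        \<and> (Q' \<subset> Q \<or> (Q' = Q \<and> r' < r)))"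

definition psym1 :: "'a set \<Rightarrow> ('a \<Rightarrow> 'a \<Rightarrow> bool) \<Rightarrow> 'q set \<Rightarrow> ('q \<Rightarrow> 'q \<Rightarrow> bool)
     \<Rightarrow> nat \<Rightarrow> 'a \<Rightarrow> 'a \<Rightarrow> bool" where
  "psym1 P le Q qle r a b \<longleftrightarrow>
     (\<exists>A \<sigma>. A \<subseteq> P \<and> linked P le A \<and> poset_iso A le Q qle
        \<and> \<not> composite P le Q qle r (sym_set P le Q qle r A)
        \<and> \<sigma> \<in> adm_gens P le Q qle r A
        \<and> sym_step P le Q qle r \<sigma> a b)"

definition psymrel :: "'a set \<Rightarrow> ('a \<Rightarrow> 'a \<Rightarrow> bool) \<Rightarrow> 'q set \<Rightarrow> ('q \<Rightarrow> 'q \<Rightarrow> bool)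
     \<Rightarrow> nat \<Rightarrow> 'a \<Rightarrow> 'a \<Rightarrow> bool" where
  "psymrel P le Q qle r = (sup (psym1 P le Q qle r) (conversep (psym1 P le Q qle r)))\<^sup>*\<^sup>*"

definition pretract_carrier :: "'a set \<Rightarrow> ('a \<Rightarrow> 'a \<Rightarrow> bool) \<Rightarrow> 'q set \<Rightarrow> ('q \<Rightarrow> 'q \<Rightarrow> bool)
     \<Rightarrow> nat \<Rightarrow> 'a set set" where
  "pretract_carrier P le Q qle r = {{b \<in> P. psymrel P le Q qle r a b} | a. a \<in> P}"

definition quot_le :: "('a \<Rightarrow> 'a \<Rightarrow> bool) \<Rightarrow> 'a set \<Rightarrow> 'a set \<Rightarrow> bool" where
  "quot_le le E F \<longleftrightarrow> (\<exists>e\<in>E. \<exists>f\<in>F. le e f)"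

definition C2 :: "nat set" where "C2 = {0, 1}"
definition C2_le :: "nat \<Rightarrow> nat \<Rightarrow> bool" where "C2_le x y \<longleftrightarrow> x \<le> y"

definition W :: "nat set" where "W = {0, 1, 2}"
definition W_le :: "nat \<Rightarrow> nat \<Rightarrow> bool" where "W_le x y \<longleftrightarrow> x = y \<or> y = 2"

definition S3_12 :: "nat set set" where
  "S3_12 = {S. S \<subseteq> {1, 2, 3, 4} \<and> (card S = 2 \<or> card S = 3)}"
definition S3_12_le :: "nat set \<Rightarrow> nat set \<Rightarrow> bool" where
  "S3_12_le S T \<longleftrightarrow> S \<subseteq> T"

end

theory Submission
  imports Defs
begin

definition tr :: "'a \<Rightarrow> 'a \<Rightarrow> 'a \<Rightarrow> 'a" where
  "tr u v x = (if x = u then v else if x = v then u else x)"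

lemma tr_u[simp]: "tr u v u = v" and tr_v[simp]: "tr u v v = u"
  by (auto simp: tr_def)
lemma tr_o[simp]: "x \<noteq> u \<Longrightarrow> x \<noteq> v \<Longrightarrow> tr u v x = x"
  by (auto simp: tr_def)
lemma tr_sym: "tr u v = tr v u"
  by (auto simp: tr_def fun_eq_iff)
lemma tr_tr[simp]: "tr u v (tr u v x) = x"
  by (auto simp: tr_def)
lemma tr_same[simp]: "tr u u x = x"
  by (auto simp: tr_def)
lemma tr_eq_iff[simp]: "tr u v x = tr u v y \<longleftrightarrow> x = y"
  by (metis tr_tr)
lemma inj_tr: "inj_on (tr u v) A"
  by (auto simp: inj_on_def)
lemma tr_comp: "u \<noteq> v \<Longrightarrow> v \<noteq> w \<Longrightarrow> u \<noteq> w \<Longrightarrow> tr u w x = tr u v (tr v w (tr u v x))"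
  by (auto simp: tr_def)
lemma tr_image_tr[simp]: "tr u v ` (tr u v ` X) = X"
  by (force simp: image_iff)
lemma card_tr_image[simp]: "card (tr u v ` X) = card X"
  by (simp add: card_image inj_tr)

lemma two_cases: "(i::nat) < 2 \<longleftrightarrow> i = 0 \<or> i = 1" by arith
lemma Union2: "(\<Union>i<(2::nat). S i) = S 0 \<union> S 1"
  by (auto simp: two_cases)

lemma autD:
  assumes "aut P le \<sigma>"
  shows "bij_betw \<sigma> P P" "\<And>x y. x\<in>P \<Longrightarrow> y\<in>P \<Longrightarrow> le (\<sigma> x) (\<sigma> y) \<longleftrightarrow> le x y"
    "\<And>x. x\<notin>P \<Longrightarrow> \<sigma> x = x"
  using assms unfolding aut_def by auto

lemma aut_mem: "aut P le \<sigma> \<Longrightarrow> x \<in> P \<Longrightarrow> \<sigma> x \<in> P"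
  using autD(1) bij_betwE by blast
lemma aut_inj: "aut P le \<sigma> \<Longrightarrow> x \<in> P \<Longrightarrow> y \<in> P \<Longrightarrow> \<sigma> x = \<sigma> y \<longleftrightarrow> x = y"
  using autD(1) bij_betw_imp_inj_on inj_on_contraD by metis
lemma aut_surj: "aut P le \<sigma> \<Longrightarrow> y \<in> P \<Longrightarrow> \<exists>x\<in>P. \<sigma> x = y"
  using autD(1) bij_betw_imp_surj_on by (metis imageE)
lemma aut_image: "aut P le \<sigma> \<Longrightarrow> \<sigma> ` P = P"
  using autD(1) bij_betw_imp_surj_on by metis

lemma moved_sub: "moved P \<sigma> \<subseteq> P" by (auto simp: moved_def)

lemma gen_famD:
  assumes "generator_fam P le Q qle 2 \<sigma> S"
  shows "aut P le \<sigma>" "S 0 \<subseteq> moved P \<sigma>" "S 1 \<subseteq> moved P \<sigma>"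
    "\<sigma> ` S 0 = S 1" "\<sigma> ` S 1 = S 0" "moved P \<sigma> = S 0 \<union> S 1"
    "poset_iso (S 0) le Q qle" "poset_iso (S 1) le Q qle"
proof -
  have g: "gen_family P le 2 \<sigma> S" "\<forall>i<2. poset_iso (S i) le Q qle" "aut P le \<sigma>"
    using assms unfolding generator_fam_def by auto
  from g(1) have a: "\<forall>i<2. S i \<subseteq> moved P \<sigma> \<and> \<sigma> ` S i = S ((i + 1) mod 2)"
    and b: "(\<Union>i<2. S i) = moved P \<sigma>"
    unfolding gen_family_def by auto
  show "aut P le \<sigma>" by fact
  show "S 0 \<subseteq> moved P \<sigma>" "S 1 \<subseteq> moved P \<sigma>" using a by auto
  show "\<sigma> ` S 0 = S 1" using a[rule_format, of 0] by simp
  show "\<sigma> ` S 1 = S 0" using a[rule_format, of 1] by simp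
  show "moved P \<sigma> = S 0 \<union> S 1" using b Union2 by metis
  show "poset_iso (S 0) le Q qle" "poset_iso (S 1) le Q qle" using g(2) by auto
qed

lemma sym_step2:
  assumes "sym_step P le Q qle 2 \<sigma> a b"
  obtains S i j where "generator_fam P le Q qle 2 \<sigma> S" "i<2" "j<2" "S i \<noteq> S j"
    "a \<in> S i" "b \<in> S j" "b = \<sigma> a"
proof -
  obtain S i j q where h: "generator_fam P le Q qle 2 \<sigma> S" "i < 2" "j < 2" "S i \<noteq> S j"
        "a \<in> S i" "b \<in> S j" "1 \<le> q" "q < 2" "b = (\<sigma> ^^ q) a"
    using assms unfolding sym_step_def by blast
  have "q = 1" using h by arith
  then have "b = \<sigma> a" using h(9) by (simp add: One_nat_def)
  then show ?thesis using that h by blast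
qed

lemma sym_step2_mem:
  assumes "sym_step P le Q qle 2 \<sigma> a b"
  shows "a \<in> moved P \<sigma>" "b \<in> moved P \<sigma>" "b = \<sigma> a" "aut P le \<sigma>" "a \<in> P" "b \<in> P"
proof -
  obtain S i j where h: "generator_fam P le Q qle 2 \<sigma> S" "i<2" "j<2" "S i \<noteq> S j"
    "a \<in> S i" "b \<in> S j" "b = \<sigma> a" using sym_step2[OF assms] by blast
  have "S i \<subseteq> moved P \<sigma>" "S j \<subseteq> moved P \<sigma>" using gen_famD[OF h(1)] h(2,3) two_cases by auto
  then show "a \<in> moved P \<sigma>" "b \<in> moved P \<sigma>" using h by auto
  then show "a \<in> P" "b \<in> P" using moved_sub[of P \<sigma>] by auto
  show "b = \<sigma> a" by fact
  show "aut P le \<sigma>" using gen_famD[OF h(1)] by simp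
qed

lemma psym1_step:
  assumes "psym1 P le Q qle r a b"
  shows "sym_step P le Q qle r (SOME \<sigma>. sym_step P le Q qle r \<sigma> a b) a b"
  using assms unfolding psym1_def by (metis (mono_tags, lifting) someI)

lemma psym1_sym1: "psym1 P le Q qle r a b \<Longrightarrow> sym1 P le Q qle r a b"
  unfolding psym1_def sym1_def by blast

lemma psymrel_symrel: "psymrel P le Q qle r a b \<Longrightarrow> symrel P le Q qle r a b"
  unfolding psymrel_def symrel_def
  by (rule rtranclp_mono[THEN predicate2D, rotated], assumption)
     (auto simp: psym1_sym1)

lemma psymrel_sym: "psymrel P le Q qle r a b \<Longrightarrow> psymrel P le Q qle r b a"
proof -
  have "symp (sup (psym1 P le Q qle r) (conversep (psym1 P le Q qle r)))"
    by (auto simp: symp_def)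
  then show "psymrel P le Q qle r a b \<Longrightarrow> psymrel P le Q qle r b a"
    unfolding psymrel_def using symp_rtranclp by (metis sympD)
qed

lemma psymrel_trans: "psymrel P le Q qle r a b \<Longrightarrow> psymrel P le Q qle r b c \<Longrightarrow> psymrel P le Q qle r a c"
  unfolding psymrel_def by (rule rtranclp_trans)

lemma psym1_psymrel: "psym1 P le Q qle r a b \<Longrightarrow> psymrel P le Q qle r a b"
  unfolding psymrel_def by auto

lemma psymrel_inv:
  assumes "psymrel P le Q qle 2 a b" "a \<in> P"
    and inv: "\<And>\<sigma> x. aut P le \<sigma> \<Longrightarrow> x \<in> P \<Longrightarrow> \<phi> (\<sigma> x) = \<phi> x"
  shows "b \<in> P \<and> \<phi> b = \<phi> a"
  using assms(1) unfolding psymrel_def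
proof (induction rule: rtranclp_induct)
  case base
  then show ?case using assms(2) by simp
next
  case (step y z)
  from step.hyps(2) have "psym1 P le Q qle 2 y z \<or> psym1 P le Q qle 2 z y" by auto
  then show ?case
  proof
    assume "psym1 P le Q qle 2 y z"
    from sym_step2_mem[OF psym1_step[OF this]] step.IH inv show ?thesis by metis
  next
    assume "psym1 P le Q qle 2 z y"
    from sym_step2_mem[OF psym1_step[OF this]] step.IH inv show ?thesis by metis
  qed
qed



locale bip =
  fixes P :: "'a set" and le :: "'a \<Rightarrow> 'a \<Rightarrow> bool" and E F :: "'a set"
  assumes fin: "finite P"
    and PEF: "P = E \<union> F" and EF: "E \<inter> F = {}"
    and refl: "\<And>x. x \<in> P \<Longrightarrow> le x x"
    and comp: "\<And>x y. x \<in> P \<Longrightarrow> y \<in> P \<Longrightarrow> le x y \<Longrightarrow> x \<noteq> y \<Longrightarrow> x \<in> E \<and> y \<in> F"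
    and up: "\<And>e. e \<in> E \<Longrightarrow> \<exists>f\<in>F. le e f"
begin

definition U where "U e = {f \<in> F. le e f}"

lemma EP: "x \<in> E \<Longrightarrow> x \<in> P" and FP: "x \<in> F \<Longrightarrow> x \<in> P" using PEF by auto
lemma finE: "finite E" and finF: "finite F" using fin PEF by auto
lemma U_sub: "U e \<subseteq> F" by (auto simp: U_def)
lemma finU: "finite (U e)" using U_sub finF finite_subset by blast
lemma E_notF: "x \<in> E \<Longrightarrow> x \<notin> F" using EF by auto

lemma E_iff: "x \<in> E \<longleftrightarrow> x \<in> P \<and> (\<exists>y\<in>P. le x y \<and> x \<noteq> y)"
  using up comp EF FP EP by blast

lemma le_EE: "x \<in> E \<Longrightarrow> y \<in> E \<Longrightarrow> le x y \<Longrightarrow> x = y"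
  using comp EP EF by blast
lemma le_FF: "x \<in> F \<Longrightarrow> y \<in> F \<Longrightarrow> le x y \<Longrightarrow> x = y"
  using comp FP EF by blast
lemma le_FE: "x \<in> F \<Longrightarrow> y \<in> E \<Longrightarrow> le x y \<Longrightarrow> False"
  using comp FP EP EF by blast
lemma le_xE: "x \<in> P \<Longrightarrow> y \<in> E \<Longrightarrow> le x y \<longleftrightarrow> x = y"
  using comp EP EF refl by blast
lemma le_Fx: "x \<in> F \<Longrightarrow> y \<in> P \<Longrightarrow> le x y \<longleftrightarrow> x = y"
  using comp FP EF refl by blast
lemma le_Ex: "x \<in> E \<Longrightarrow> y \<in> P \<Longrightarrow> le x y \<longleftrightarrow> x = y \<or> y \<in> U x"
  using comp EP EF refl unfolding U_def by blast

lemma less_iff: "x \<in> P \<Longrightarrow> y \<in> P \<Longrightarrow> less_in le x y \<longleftrightarrow> x \<in> E \<and> y \<in> F \<and> le x y"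
  unfolding less_in_def using comp EF by blast

lemma aut_E: assumes "aut P le \<sigma>" "x \<in> E" shows "\<sigma> x \<in> E"
proof -
  obtain y where y: "y \<in> P" "le x y" "x \<noteq> y" using assms(2) E_iff by blast
  have "x \<in> P" using assms(2) EP by auto
  then show ?thesis using E_iff y assms(1) aut_mem aut_inj autD(2) by metis
qed

lemma aut_F: assumes "aut P le \<sigma>" "x \<in> F" shows "\<sigma> x \<in> F"
proof (rule ccontr)
  assume "\<sigma> x \<notin> F"
  have xP: "x \<in> P" using assms(2) FP by auto
  then have "\<sigma> x \<in> E" using aut_mem[OF assms(1)] PEF \<open>\<sigma> x \<notin> F\<close> by auto
  then obtain y where y: "y \<in> P" "le (\<sigma> x) y" "\<sigma> x \<noteq> y" using E_iff by blast
  obtain z where z: "z \<in> P" "\<sigma> z = y" using aut_surj[OF assms(1) y(1)] by blast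
  have "le x z" "x \<noteq> z" using y z autD(2)[OF assms(1)] xP by auto
  then have "x \<in> E" using comp xP z by blast
  then show False using assms(2) EF by auto
qed

lemma aut_E_iff: "aut P le \<sigma> \<Longrightarrow> x \<in> P \<Longrightarrow> \<sigma> x \<in> E \<longleftrightarrow> x \<in> E"
  using aut_E aut_F PEF EF by blast
lemma aut_F_iff: "aut P le \<sigma> \<Longrightarrow> x \<in> P \<Longrightarrow> \<sigma> x \<in> F \<longleftrightarrow> x \<in> F"
  using aut_E aut_F PEF EF by blast

lemma aut_U: assumes "aut P le \<sigma>" "e \<in> E" shows "U (\<sigma> e) = \<sigma> ` U e"
proof
  have eP: "e \<in> P" using EP assms(2) by auto
  show "\<sigma> ` U e \<subseteq> U (\<sigma> e)"
    using assms aut_F autD(2)[OF assms(1)] eP FP unfolding U_def by auto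
  show "U (\<sigma> e) \<subseteq> \<sigma> ` U e"
  proof
    fix f assume f: "f \<in> U (\<sigma> e)"
    then have fF: "f \<in> F" and l: "le (\<sigma> e) f" by (auto simp: U_def)
    obtain g where g: "g \<in> P" "\<sigma> g = f" using aut_surj[OF assms(1)] FP fF by blast
    have "g \<in> F" using aut_F_iff[OF assms(1) g(1)] g fF by auto
    moreover have "le e g" using l g autD(2)[OF assms(1) eP g(1)] by auto
    ultimately show "f \<in> \<sigma> ` U e" using g unfolding U_def by auto
  qed
qed

lemma card_U_aut: "aut P le \<sigma> \<Longrightarrow> e \<in> E \<Longrightarrow> card (U (\<sigma> e)) = card (U e)"
proof -
  assume a: "aut P le \<sigma>" "e \<in> E"
  have "inj_on \<sigma> (U e)" using aut_inj[OF a(1)] U_sub FP unfolding inj_on_def by blast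
  then show ?thesis using aut_U[OF a] card_image by metis
qed

lemma chain_card: assumes "C \<subseteq> P" "is_chain le C" shows "card C \<le> 2"
proof -
  have fC: "finite C" using assms(1) fin finite_subset by blast
  have fCE: "finite (C \<inter> E)" "finite (C \<inter> F)" using fC by auto
  have "\<forall>x\<in>C \<inter> E. \<forall>y\<in>C \<inter> E. x = y"
    using assms le_EE unfolding is_chain_def by blast
  then have "card (C \<inter> E) \<le> Suc 0" using card_le_Suc0_iff_eq[OF fCE(1)] by blast
  moreover have "\<forall>x\<in>C \<inter> F. \<forall>y\<in>C \<inter> F. x = y"
    using assms le_FF unfolding is_chain_def by blast
  then have "card (C \<inter> F) \<le> Suc 0" using card_le_Suc0_iff_eq[OF fCE(2)] by blast
  moreover have "C = (C \<inter> E) \<union> (C \<inter> F)" using assms(1) PEF by auto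
  ultimately show ?thesis using card_Un_le[of "C \<inter> E" "C \<inter> F"] by simp
qed

lemma fin_chaincards: "finite {card C |C. C \<subseteq> X \<and> is_chain le C}" if "X \<subseteq> P"
proof -
  have "{card C |C. C \<subseteq> X \<and> is_chain le C} \<subseteq> card ` Pow X" by auto
  moreover have "finite X" using that fin finite_subset by blast
  ultimately show ?thesis using finite_subset by blast
qed

lemma height_2:
  assumes "X \<subseteq> P" "x \<in> X" "y \<in> X" "le x y" "x \<noteq> y"
  shows "height le X = 2"
  unfolding height_def
proof (rule Max_eqI)
  show "finite {card C |C. C \<subseteq> X \<and> is_chain le C}" using fin_chaincards assms(1) by blast
  show "n \<le> 2" if hn: "n \<in> {card C |C. C \<subseteq> X \<and> is_chain le C}" for n
  proof -
    obtain C where C: "n = card C" "C \<subseteq> X" "is_chain le C" using hn by blast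
    have "C \<subseteq> P" using C(2) assms(1) by (rule subset_trans)
    then show ?thesis using chain_card C(1,3) by simp
  qed
  have xyP: "x \<in> P" "y \<in> P" using assms(1-3) by (simp_all add: subsetD)
  have "is_chain le {x, y}" unfolding is_chain_def using assms(4) refl[OF xyP(1)] refl[OF xyP(2)] by simp
  moreover have "card {x, y} = 2" using assms(5) by simp
  moreover have "{x, y} \<subseteq> X" using assms(2,3) by simp
  ultimately show "2 \<in> {card C |C. C \<subseteq> X \<and> is_chain le C}" by (metis (mono_tags, lifting) mem_Collect_eq)
qed

lemma height_1:
  assumes "X \<subseteq> P" "X \<noteq> {}" "\<And>x y. x \<in> X \<Longrightarrow> y \<in> X \<Longrightarrow> le x y \<Longrightarrow> x = y"
  shows "height le X = 1"
  unfolding height_def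
proof (rule Max_eqI)
  show "finite {card C |C. C \<subseteq> X \<and> is_chain le C}" using fin_chaincards assms(1) by blast
  show "n \<le> 1" if hn: "n \<in> {card C |C. C \<subseteq> X \<and> is_chain le C}" for n
  proof -
    obtain C where C: "n = card C" "C \<subseteq> X" "is_chain le C" using hn by blast
    have "C \<subseteq> P" using C(2) assms(1) by (rule subset_trans)
    then have "finite C" using fin finite_subset by metis
    have "\<forall>x\<in>C. \<forall>y\<in>C. x = y"
    proof (intro ballI)
      fix a b assume ab: "a \<in> C" "b \<in> C"
      then have "le a b \<or> le b a" using C(3) unfolding is_chain_def by simp
      moreover have "a \<in> X" "b \<in> X" using ab C(2) by (simp_all add: subsetD)
      ultimately show "a = b" using assms(3)[of a b] assms(3)[of b a] by metis
    qed
    then have "card C \<le> Suc 0" using card_le_Suc0_iff_eq[OF \<open>finite C\<close>] by simp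
    then show ?thesis using C(1) by simp
  qed
  obtain x where x: "x \<in> X" using assms(2) by blast
  then have xP: "x \<in> P" using assms(1) by (simp add: subsetD)
  have "is_chain le {x}" unfolding is_chain_def using refl[OF xP] by simp
  moreover have "card {x} = 1" by simp
  moreover have "{x} \<subseteq> X" using x by simp
  ultimately show "1 \<in> {card C |C. C \<subseteq> X \<and> is_chain le C}" by (metis (mono_tags, lifting) mem_Collect_eq)
qed

lemma prod3: "(p::nat) + q = 3 \<Longrightarrow> p * q \<le> 2"
proof -
  assume "p + q = 3"
  then have "p = 0 \<and> q = 3 \<or> p = 1 \<and> q = 2 \<or> p = 2 \<and> q = 1 \<or> p = 3 \<and> q = 0" by linarith
  then show ?thesis by (elim disjE) simp_all
qed

lemma n_ord_le2: assumes "B \<subseteq> P" "card B = 3" shows "n_ord le B \<le> 2"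
proof -
  have fB: "finite B" using assms(2) by (metis card.infinite zero_neq_numeral)
  have sub: "{(a, b). a \<in> B \<and> b \<in> B \<and> less_in le a b} \<subseteq> (B \<inter> E) \<times> (B \<inter> F)"
  proof
    fix p assume "p \<in> {(a, b). a \<in> B \<and> b \<in> B \<and> less_in le a b}"
    then obtain a b where p: "p = (a, b)" "a \<in> B" "b \<in> B" "less_in le a b" by blast
    then have "a \<in> P" "b \<in> P" using assms(1) by (simp_all add: subsetD)
    then have "a \<in> E" "b \<in> F" using less_iff p(4) by simp_all
    then show "p \<in> (B \<inter> E) \<times> (B \<inter> F)" using p by simp
  qed
  have fin2: "finite ((B \<inter> E) \<times> (B \<inter> F))" using fB by simp
  have 1: "n_ord le B \<le> card (B \<inter> E) * card (B \<inter> F)"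
    unfolding n_ord_def using card_mono[OF fin2 sub] card_cartesian_product by metis
  have "B = (B \<inter> E) \<union> (B \<inter> F)" using assms(1) PEF by auto
  moreover have "(B \<inter> E) \<inter> (B \<inter> F) = {}" using EF by auto
  ultimately have "card (B \<inter> E) + card (B \<inter> F) = 3"
    using card_Un_disjoint[of "B \<inter> E" "B \<inter> F"] fB assms(2) by simp
  then have "card (B \<inter> E) * card (B \<inter> F) \<le> 2" by (rule prod3)
  with 1 show ?thesis by simp
qed

end

lemma n_ord_single: assumes "card B = 1" shows "n_ord le B = 0"
proof -
  obtain x where x: "B = {x}" using card_1_singletonE[OF assms] by metis
  have "{(a, b). a \<in> B \<and> b \<in> B \<and> less_in le a b} = {}"
    unfolding x less_in_def by simp
  then show ?thesis unfolding n_ord_def by (metis card.empty)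
qed



context bip begin

lemma iso_W_elems:
  assumes "poset_iso X le W W_le" "X \<subseteq> P"
  obtains a b c where "X = {a,b,c}" "a \<in> E" "b \<in> E" "c \<in> F" "a \<noteq> b" "le a c" "le b c"
proof -
  obtain \<beta> where \<beta>: "bij_betw \<beta> X W" "\<forall>x\<in>X. \<forall>y\<in>X. le x y \<longleftrightarrow> W_le (\<beta> x) (\<beta> y)"
    using assms(1) unfolding poset_iso_def by blast
  have img: "\<beta> ` X = {0,1,2}" using bij_betw_imp_surj_on[OF \<beta>(1)] by (simp add: W_def)
  have inj: "inj_on \<beta> X" using \<beta>(1) bij_betw_imp_inj_on by blast
  have "0 \<in> \<beta> ` X" "1 \<in> \<beta> ` X" "2 \<in> \<beta> ` X" unfolding img by simp_all
  then obtain a b c where abc: "a \<in> X" "\<beta> a = 0" "b \<in> X" "\<beta> b = 1" "c \<in> X" "\<beta> c = 2"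
    by (metis imageE)
  have X: "X = {a,b,c}"
  proof
    show "{a,b,c} \<subseteq> X" using abc by simp
    show "X \<subseteq> {a,b,c}"
    proof
      fix x assume x: "x \<in> X"
      then have "\<beta> x \<in> {0,1,2}" using img by blast
      then have "\<beta> x = \<beta> a \<or> \<beta> x = \<beta> b \<or> \<beta> x = \<beta> c" using abc by simp
      then show "x \<in> {a,b,c}" using inj_onD[OF inj] x abc by blast
    qed
  qed
  have lac: "le a c" using \<beta>(2) abc by (simp add: W_le_def)
  have lbc: "le b c" using \<beta>(2) abc by (simp add: W_le_def)
  have "a \<noteq> c" "b \<noteq> c" "a \<noteq> b" using abc by auto
  moreover have "a \<in> P" "b \<in> P" "c \<in> P" using abc assms(2) by (simp_all add: subsetD)
  ultimately have "a \<in> E" "b \<in> E" "c \<in> F" using comp lac lbc by blast+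
  then show ?thesis using that X \<open>a \<noteq> b\<close> lac lbc by blast
qed

lemma wgen:
  assumes g: "generator_fam P le W W_le 2 \<sigma> S"
  obtains a b c where "S 0 = {a,b,c}" "a \<in> E" "b \<in> E" "c \<in> F" "a \<noteq> b" "le a c" "le b c"
    "\<sigma> c \<in> F" "\<sigma> c \<noteq> c" "\<sigma> (\<sigma> c) = c" "\<And>f. f \<in> F \<Longrightarrow> \<sigma> f = tr c (\<sigma> c) f"
proof -
  note G = gen_famD[OF g]
  have S0P: "S 0 \<subseteq> P" using G(2) moved_sub by (rule subset_trans)
  obtain a b c where abc: "S 0 = {a,b,c}" "a \<in> E" "b \<in> E" "c \<in> F" "a \<noteq> b" "le a c" "le b c"
    using iso_W_elems[OF G(7) S0P] by blast
  have cm: "c \<in> moved P \<sigma>" using G(2) abc(1) by auto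
  then have sc: "\<sigma> c \<noteq> c" by (simp add: moved_def)
  have scF: "\<sigma> c \<in> F" using aut_F[OF G(1) abc(4)] .
  have "\<sigma> c \<in> S 1" using G(4) abc(1) by auto
  then have "\<sigma> (\<sigma> c) \<in> S 0" using G(5) by auto
  moreover have "\<sigma> (\<sigma> c) \<in> F" using aut_F[OF G(1) scF] .
  ultimately have ssc: "\<sigma> (\<sigma> c) = c" using abc E_notF by auto
  have trf: "\<sigma> f = tr c (\<sigma> c) f" if f: "f \<in> F" for f
  proof (cases "f = c \<or> f = \<sigma> c")
    case True
    then show ?thesis using ssc by auto
  next
    case False
    have "\<sigma> f = f"
    proof (rule ccontr)
      assume "\<sigma> f \<noteq> f"
      then have "f \<in> moved P \<sigma>" using f FP by (simp add: moved_def)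
      then have "f \<in> S 0 \<or> f \<in> S 1" using G(6) by auto
      then show False
      proof
        assume "f \<in> S 0"
        then show False using abc False f E_notF by auto
      next
        assume "f \<in> S 1"
        then have "f \<in> \<sigma> ` {a,b,c}" using G(4) abc(1) by simp
        moreover have "\<sigma> a \<in> E" "\<sigma> b \<in> E" using aut_E[OF G(1)] abc by auto
        ultimately show False using False f E_notF by auto
      qed
    qed
    then show ?thesis using False by simp
  qed
  show ?thesis using that abc scF sc ssc trf by blast
qed

lemma le_char: "x \<in> P \<Longrightarrow> y \<in> P \<Longrightarrow> le x y \<longleftrightarrow> x = y \<or> (x \<in> E \<and> y \<in> U x)"
  using le_Ex le_Fx PEF by blast

lemma twin_composite:
  assumes e: "e \<in> E" "e' \<in> E" "e \<noteq> e'" "U e = U e'"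
  shows "composite P le W W_le 2 P"
proof -
  define \<tau> where "\<tau> = tr e e'"
  have eP: "e \<in> P" "e' \<in> P" using e EP by auto
  have tP: "\<tau> x \<in> P" if "x \<in> P" for x
    using that eP unfolding \<tau>_def tr_def by auto
  have tE: "\<tau> x \<in> E \<longleftrightarrow> x \<in> E" for x
    using e unfolding \<tau>_def tr_def by auto
  have tU: "U (\<tau> x) = U x" for x
    using e unfolding \<tau>_def tr_def by auto
  have tUy: "\<tau> y \<in> U x \<longleftrightarrow> y \<in> U x" for x y
  proof (cases "y = e \<or> y = e'")
    case True
    then have "y \<in> E" "\<tau> y \<in> E" using e unfolding \<tau>_def by auto
    then have "y \<notin> U x" "\<tau> y \<notin> U x" using U_sub[of x] E_notF by auto
    then show ?thesis by simp
  next
    case False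
    then show ?thesis unfolding \<tau>_def by simp
  qed
  have aut: "aut P le \<tau>"
    unfolding aut_def
  proof (intro conjI ballI allI impI)
    have "inj_on \<tau> P" unfolding \<tau>_def by (rule inj_tr)
    moreover have "\<tau> ` P = P"
    proof
      show "\<tau> ` P \<subseteq> P" using tP by auto
      show "P \<subseteq> \<tau> ` P"
      proof
        fix x assume "x \<in> P"
        then have "\<tau> (\<tau> x) = x" "\<tau> x \<in> P" using tP unfolding \<tau>_def by simp_all
        then show "x \<in> \<tau> ` P" by (metis imageI)
      qed
    qed
    ultimately show "bij_betw \<tau> P P" by (simp add: bij_betw_def)
  next
    fix x y assume xy: "x \<in> P" "y \<in> P"
    have "le (\<tau> x) (\<tau> y) \<longleftrightarrow> \<tau> x = \<tau> y \<or> (\<tau> x \<in> E \<and> \<tau> y \<in> U (\<tau> x))"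
      using le_char tP xy by blast
    also have "\<dots> \<longleftrightarrow> x = y \<or> (x \<in> E \<and> y \<in> U x)"
      using tE tU tUy unfolding \<tau>_def by simp
    also have "\<dots> \<longleftrightarrow> le x y" using le_char xy by blast
    finally show "le x y \<longleftrightarrow> le (\<tau> x) (\<tau> y)" by simp
  next
    fix x assume "x \<notin> P"
    then show "\<tau> x = x" using eP unfolding \<tau>_def by (metis tr_o)
  qed
  have mv: "moved P \<tau> = {e, e'}"
  proof
    show "moved P \<tau> \<subseteq> {e, e'}" unfolding moved_def \<tau>_def by (auto simp: tr_def)
    show "{e, e'} \<subseteq> moved P \<tau>" unfolding moved_def \<tau>_def using eP e(3) by auto
  qed
  define T :: "nat \<Rightarrow> 'a set" where "T i = (if i = 0 then {e} else {e'})" for i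
  have cT: "card (T i) = 1" for i unfolding T_def by simp
  have h1: "height le (T i) = 1" for i
    by (rule height_1) (use eP e in \<open>auto simp: T_def split: if_splits\<close>)
  have h2: "height le {e, e'} = 1"
  proof (rule height_1)
    show "{e, e'} \<subseteq> P" using eP by simp
    show "{e, e'} \<noteq> {}" by simp
    fix x y assume "x \<in> {e, e'}" "y \<in> {e, e'}" "le x y"
    then show "x = y" using le_EE e by blast
  qed
  have fam: "gen_family P le 2 \<tau> T"
    unfolding gen_family_def
  proof (intro conjI allI impI)
    fix i :: nat assume i: "i < 2"
    show "T i \<subseteq> moved P \<tau>" unfolding mv T_def by auto
    show "max_ordered le (moved P \<tau>) (T i)"
      unfolding max_ordered_def
    proof (intro conjI allI impI)
      show "T i \<subseteq> moved P \<tau>" unfolding mv T_def by auto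
      fix B assume "B \<subseteq> moved P \<tau> \<and> card B = card (T i)"
      then have "card B = 1" using cT by simp
      then have "n_ord le B = 0" by (rule n_ord_single)
      then show "n_ord le B \<le> n_ord le (T i)" by simp
    qed
    show "\<tau> ` T i = T ((i + 1) mod 2)"
      using i unfolding T_def \<tau>_def by (auto simp: two_cases)
    show "height le (T i) = height le (moved P \<tau>)" unfolding mv h1 h2 by simp
  next
    show "(\<Union>i<2. T i) = moved P \<tau>" unfolding Union2 mv T_def by auto
  qed
  have isoT: "poset_iso (T i) le {0::nat} W_le" for i
    unfolding poset_iso_def
  proof (intro exI[of _ "\<lambda>_. 0"] conjI)
    show "bij_betw (\<lambda>_. 0::nat) (T i) {0}" unfolding T_def bij_betw_def by auto
    show "\<forall>x\<in>T i. \<forall>y\<in>T i. le x y = W_le 0 0" using refl eP unfolding T_def W_le_def by auto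
  qed
  have gfam: "generator_fam P le {0::nat} W_le 2 \<tau> T"
    unfolding generator_fam_def
  proof (intro conjI allI impI)
    show "aut P le \<tau>" by fact
    show "gen_family P le 2 \<tau> T" by fact
    show "(2::nat) \<le> 2" by simp
    fix i :: nat assume "i < 2"
    show "poset_iso (T i) le {0} W_le" by (rule isoT)
  next
    fix T' :: "nat \<Rightarrow> 'a set" and i :: nat
    assume T': "gen_family P le 2 \<tau> T'" and i: "i < 2"
    from T' have a: "\<forall>i<2. T' i \<subseteq> moved P \<tau> \<and> \<tau> ` T' i = T' ((i + 1) mod 2)"
      and b: "(\<Union>i<2. T' i) = moved P \<tau>"
      unfolding gen_family_def by auto
    have u: "T' 0 \<union> T' 1 = {e, e'}" using b Union2 mv by metis
    have i01: "\<tau> ` T' 0 = T' 1" "\<tau> ` T' 1 = T' 0" using a by auto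
    have "T' i \<noteq> {}"
    proof
      assume "T' i = {}"
      then have "T' 0 = {} \<and> T' 1 = {}" using i i01 by (auto simp: two_cases)
      then show False using u by simp
    qed
    moreover have "finite (T' i)" using a i mv by (metis finite.emptyI finite.insertI finite_subset)
    ultimately have "card (T' i) \<ge> 1" by (simp add: Suc_leI card_gt_0_iff)
    then show "card (T i) \<le> card (T' i)" using cT by simp
  qed
  have step: "sym_step P le {0::nat} W_le 2 \<tau> e e'"
    unfolding sym_step_def
    by (rule exI[of _ T], rule exI[of _ 0], rule exI[of _ 1], rule exI[of _ 1])
       (use gfam e(3) in \<open>simp add: T_def \<tau>_def\<close>)
  have adm: "\<tau> \<in> adm_gens P le {0::nat} W_le 2 {e}"
    unfolding adm_gens_def
  proof (intro CollectI conjI ballI impI)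
    show "is_generator P le {0} W_le 2 \<tau>" unfolding is_generator_def using gfam by blast
    fix b assume b: "b \<in> P" "\<not> (\<exists>a\<in>{e}. symrel P le {0} W_le 2 a b)"
    show "\<tau> b = b"
    proof (rule ccontr)
      assume "\<tau> b \<noteq> b"
      then have "b = e \<or> b = e'" unfolding \<tau>_def by (metis tr_o)
      moreover have "symrel P le {0} W_le 2 e e"  unfolding symrel_def by simp
      moreover have "symrel P le {0} W_le 2 e e'"
        unfolding symrel_def using step unfolding sym1_def
        by (intro r_into_rtranclp) auto
      ultimately show False using b by auto
    qed
  qed
  have "\<tau> \<in> sym_group P le {0::nat} W_le 2 {e}"
    unfolding sym_group_def using gen_closure.gc_comp[OF adm gen_closure.gc_id] by simp
  moreover have "\<tau> e \<noteq> e" unfolding \<tau>_def using e(3) by simp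
  ultimately have eS: "e \<in> sym_set P le {0::nat} W_le 2 {e}"
    unfolding sym_set_def using eP by blast
  have linked: "linked P le {e}" unfolding linked_def less_in_def by simp
  have "is_sym_set P le {0::nat} W_le 2 (sym_set P le {0} W_le 2 {e})"
    unfolding is_sym_set_def using eP linked isoT[of 0] by (auto simp: T_def)
  moreover have "sym_set P le {0::nat} W_le 2 {e} \<subseteq> P" unfolding sym_set_def by auto
  moreover have "{0::nat} \<subset> W" by (auto simp: W_def)
  ultimately show ?thesis unfolding composite_def using eS
    by (intro exI[of _ "{0::nat}"] exI[of _ "2::nat"] exI[of _ "sym_set P le {0} W_le 2 {e}"]) auto
qed

end


lemma binom_1: assumes "(m::nat) choose s = 1" "s \<le> m" shows "s = 0 \<or> s = m"
proof (rule ccontr)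
  assume "\<not> (s = 0 \<or> s = m)"
  then have "0 < s" "s < m" using assms(2) by auto
  then obtain m' s' where ms: "m = Suc m'" "s = Suc s'" by (metis gr0_implies_Suc less_imp_Suc_add)
  then have "m choose s = (m' choose s') + (m' choose Suc s')" by simp
  moreover have "m' choose s' \<ge> 1" "m' choose Suc s' \<ge> 1"
    using ms \<open>s < m\<close> by (simp_all add: Suc_leI)
  ultimately show False using assms(1) by simp
qed

lemma binom_2: assumes "(n::nat) choose r = 2" shows "n = 2 \<and> r = 1"
proof -
  have "r \<le> n" using assms by (metis binomial_eq_0 not_le zero_neq_numeral)
  have "r \<noteq> 0" using assms by (metis binomial_n_0 numeral_One numeral_eq_iff semiring_norm(85))
  have "r \<noteq> n" using assms by (metis binomial_n_n numeral_One numeral_eq_iff semiring_norm(85))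
  then have rn: "r < n" using \<open>r \<le> n\<close> by simp
  obtain n' r' where nr: "n = Suc n'" "r = Suc r'" using \<open>r \<noteq> 0\<close> rn
    by (metis gr0_implies_Suc gr_zeroI less_imp_Suc_add)
  then have sum: "(n' choose r') + (n' choose Suc r') = 2" using assms by simp
  have ge: "n' choose r' \<ge> 1" "n' choose Suc r' \<ge> 1" using nr rn by (simp_all add: Suc_leI)
  then have "n' choose r' = 1" "n' choose Suc r' = 1" using sum by linarith+
  have "r' \<le> n'" "Suc r' \<le> n'" using nr rn by simp_all
  have "r' = 0 \<or> r' = n'" using binom_1[OF \<open>n' choose r' = 1\<close> \<open>r' \<le> n'\<close>] .
  moreover have "Suc r' = 0 \<or> Suc r' = n'" using binom_1[OF \<open>n' choose Suc r' = 1\<close> \<open>Suc r' \<le> n'\<close>] .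
  ultimately show ?thesis using nr rn by auto
qed

lemma diff_eq_diff: "B \<subseteq> A \<Longrightarrow> C \<subseteq> A \<Longrightarrow> A - B = A - C \<Longrightarrow> B = C"
  by blast

context bip begin

lemma std_iso:
  assumes cF: "card F = 4" and cU: "\<forall>e\<in>E. card (U e) = 2" and iU: "inj_on U E"
    and sU: "\<forall>Y. Y \<subseteq> F \<longrightarrow> card Y = 2 \<longrightarrow> (\<exists>e\<in>E. U e = Y)"
  shows "poset_iso P le S3_12 S3_12_le"
proof -
  define N4 where "N4 = {1,2,3,4::nat}"
  have cN: "card N4 = 4" "finite N4" unfolding N4_def by simp_all
  obtain g where g: "bij_betw g F N4" using finite_same_card_bij[OF finF cN(2)] cF cN by metis
  have ginj: "inj_on g F" using g bij_betw_imp_inj_on by blast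
  have gimg: "g ` F = N4" using g bij_betw_imp_surj_on by blast
  have gN: "g x \<in> N4" if "x \<in> F" for x using gimg that by blast
  define h where "h x = (if x \<in> F then N4 - {g x} else N4 - g ` U x)" for x
  have gU: "g ` U x \<subseteq> N4" for x using U_sub gimg by blast
  have cgU: "card (g ` U x) = 2" if "x \<in> E" for x
    using cU that card_image inj_on_subset[OF ginj U_sub] by metis
  have hF: "h x \<subseteq> N4 \<and> card (h x) = 3" if "x \<in> F" for x
    using that gN[OF that] cN unfolding h_def by (simp add: card_Diff_singleton)
  have hE: "h x \<subseteq> N4 \<and> card (h x) = 2" if "x \<in> E" for x
  proof -
    have "h x = N4 - g ` U x" using that E_notF unfolding h_def by simp
    moreover have "card (N4 - g ` U x) = 2"
      using card_Diff_subset[OF finite_subset[OF gU cN(2)] gU] cgU[OF that] cN by simp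
    ultimately show ?thesis by auto
  qed
  have S3: "S3_12 = {S. S \<subseteq> N4 \<and> (card S = 2 \<or> card S = 3)}" unfolding S3_12_def N4_def by simp
  have hin: "h x \<in> S3_12" if "x \<in> P" for x
    using that PEF hF hE unfolding S3 by auto
  have finh: "finite (h x)" if "x \<in> P" for x using hin[OF that] cN(2) finite_subset unfolding S3 by blast
  have hle: "le x y \<longleftrightarrow> h x \<subseteq> h y" if xy: "x \<in> P" "y \<in> P" for x y
  proof (cases "x \<in> E")
    case xE: True
    show ?thesis
    proof (cases "y \<in> E")
      case True
      have "h x \<subseteq> h y \<longleftrightarrow> h x = h y"
        using hE[OF xE] hE[OF True] card_subset_eq[OF finh[OF xy(2)]] by auto
      also have "\<dots> \<longleftrightarrow> N4 - g ` U x = N4 - g ` U y"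
        using xE True E_notF unfolding h_def by auto
      also have "\<dots> \<longleftrightarrow> g ` U x = g ` U y"
        using diff_eq_diff[OF gU[of x] gU[of y]] by blast
      also have "\<dots> \<longleftrightarrow> U x = U y"
        using inj_on_image_eq_iff[OF ginj U_sub U_sub] by blast
      also have "\<dots> \<longleftrightarrow> x = y" using iU xE True inj_on_eq_iff by metis
      also have "\<dots> \<longleftrightarrow> le x y" using le_EE xE True refl xy by blast
      finally show ?thesis by simp
    next
      case False
      then have yF: "y \<in> F" using xy PEF by auto
      have "le x y \<longleftrightarrow> y \<in> U x" unfolding U_def using yF by simp
      also have "\<dots> \<longleftrightarrow> g y \<in> g ` U x" using inj_on_image_mem_iff[OF ginj yF U_sub] by simp
      also have "\<dots> \<longleftrightarrow> N4 - g ` U x \<subseteq> N4 - {g y}" using gN[OF yF] gU by blast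
      also have "\<dots> \<longleftrightarrow> h x \<subseteq> h y" using xE yF E_notF unfolding h_def by simp
      finally show ?thesis .
    qed
  next
    case False
    then have xF: "x \<in> F" using xy PEF by auto
    show ?thesis
    proof (cases "y \<in> E")
      case True
      have "\<not> le x y" using le_FE xF True by blast
      moreover have "\<not> h x \<subseteq> h y"
      proof
        assume "h x \<subseteq> h y"
        then have "card (h x) \<le> card (h y)" using finh[OF xy(2)] card_mono by blast
        then show False using hF[OF xF] hE[OF True] by simp
      qed
      ultimately show ?thesis by simp
    next
      case False
      then have yF: "y \<in> F" using xy PEF by auto
      have "h x \<subseteq> h y \<longleftrightarrow> h x = h y"
        using hF[OF xF] hF[OF yF] card_subset_eq[OF finh[OF xy(2)]] by auto
      also have "\<dots> \<longleftrightarrow> {g x} = {g y}"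
        using xF yF gN unfolding h_def by auto
      also have "\<dots> \<longleftrightarrow> x = y" using ginj xF yF inj_on_eq_iff by fastforce
      also have "\<dots> \<longleftrightarrow> le x y" using le_FF xF yF refl xy by blast
      finally show ?thesis by simp
    qed
  qed
  have hinj: "inj_on h P"
  proof (rule inj_onI)
    fix x y assume xy: "x \<in> P" "y \<in> P" "h x = h y"
    then have "le x y" "le y x" using hle by auto
    then show "x = y" using xy comp[of x y] comp[of y x] EF by blast
  qed
  have hsurj: "S3_12 \<subseteq> h ` P"
  proof
    fix T assume "T \<in> S3_12"
    then have T: "T \<subseteq> N4" "card T = 2 \<or> card T = 3" unfolding S3 by auto
    have fT: "finite T" using T(1) cN(2) finite_subset by blast
    have cC: "card (N4 - T) = 4 - card T" using card_Diff_subset[OF fT T(1)] cN by simp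
    have TC: "T = N4 - (N4 - T)" using T(1) by blast
    from T(2) show "T \<in> h ` P"
    proof
      assume c2: "card T = 2"
      define Y where "Y = inv_into F g ` (N4 - T)"
      have YF: "Y \<subseteq> F" unfolding Y_def using gimg by (auto intro: inv_into_into)
      have gY: "g ` Y = N4 - T" unfolding Y_def using gimg by (simp add: image_inv_into_cancel)
      have "card Y = 2"
        using card_image[OF inj_on_subset[OF ginj YF]] gY cC c2 by simp
      then obtain e where e: "e \<in> E" "U e = Y" using sU YF by blast
      have "h e = T" using e E_notF gY TC unfolding h_def by auto
      then show ?thesis using e EP by blast
    next
      assume c3: "card T = 3"
      then have "card (N4 - T) = 1" using cC by simp
      then obtain j where j: "N4 - T = {j}" using card_1_singletonE by blast
      then have jN: "j \<in> N4" by blast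
      define f where "f = inv_into F g j"
      have fF: "f \<in> F" unfolding f_def using gimg jN by (metis inv_into_into)
      have "g f = j" unfolding f_def using gimg jN by (simp add: f_inv_into_f)
      then have "h f = T" using fF TC j unfolding h_def by simp
      then show ?thesis using fF FP by blast
    qed
  qed
  have "bij_betw h P S3_12"
    unfolding bij_betw_def using hinj hin hsurj by blast
  moreover have "\<forall>x\<in>P. \<forall>y\<in>P. le x y \<longleftrightarrow> S3_12_le (h x) (h y)"
    using hle unfolding S3_12_le_def by blast
  ultimately show ?thesis unfolding poset_iso_def by blast
qed

end


lemma posetD:
  assumes "poset P le"
  shows "\<And>x. x \<in> P \<Longrightarrow> le x x"
    "\<And>x y. x \<in> P \<Longrightarrow> y \<in> P \<Longrightarrow> le x y \<Longrightarrow> le y x \<Longrightarrow> x = y"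
    "\<And>x y z. x \<in> P \<Longrightarrow> y \<in> P \<Longrightarrow> z \<in> P \<Longrightarrow> le x y \<Longrightarrow> le y z \<Longrightarrow> le x z"
  using assms unfolding poset_def by blast+

definition minP :: "'a set \<Rightarrow> ('a \<Rightarrow> 'a \<Rightarrow> bool) \<Rightarrow> 'a \<Rightarrow> bool" where
  "minP P le x \<longleftrightarrow> (\<forall>y\<in>P. le y x \<longrightarrow> y = x)"
definition maxP :: "'a set \<Rightarrow> ('a \<Rightarrow> 'a \<Rightarrow> bool) \<Rightarrow> 'a \<Rightarrow> bool" where
  "maxP P le x \<longleftrightarrow> (\<forall>y\<in>P. le x y \<longrightarrow> y = x)"

lemma minP_aut: assumes "aut P le \<sigma>" "x \<in> P" shows "minP P le (\<sigma> x) = minP P le x"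
proof
  assume m: "minP P le (\<sigma> x)"
  show "minP P le x" unfolding minP_def
  proof (intro ballI impI)
    fix y assume "y \<in> P" "le y x"
    then have "le (\<sigma> y) (\<sigma> x)" using autD(2)[OF assms(1)] assms(2) by simp
    then have "\<sigma> y = \<sigma> x" using m aut_mem[OF assms(1) \<open>y \<in> P\<close>] unfolding minP_def by blast
    then show "y = x" using aut_inj[OF assms(1) \<open>y \<in> P\<close> assms(2)] by simp
  qed
next
  assume m: "minP P le x"
  show "minP P le (\<sigma> x)" unfolding minP_def
  proof (intro ballI impI)
    fix y assume "y \<in> P" "le y (\<sigma> x)"
    then obtain z where z: "z \<in> P" "\<sigma> z = y" using aut_surj[OF assms(1)] by blast
    then have "le z x" using autD(2)[OF assms(1) z(1) assms(2)] \<open>le y (\<sigma> x)\<close> by simp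
    then have "z = x" using m z(1) unfolding minP_def by blast
    then show "y = \<sigma> x" using z by simp
  qed
qed

lemma maxP_aut: assumes "aut P le \<sigma>" "x \<in> P" shows "maxP P le (\<sigma> x) = maxP P le x"
proof
  assume m: "maxP P le (\<sigma> x)"
  show "maxP P le x" unfolding maxP_def
  proof (intro ballI impI)
    fix y assume "y \<in> P" "le x y"
    then have "le (\<sigma> x) (\<sigma> y)" using autD(2)[OF assms(1)] assms(2) by simp
    then have "\<sigma> y = \<sigma> x" using m aut_mem[OF assms(1) \<open>y \<in> P\<close>] unfolding maxP_def by blast
    then show "y = x" using aut_inj[OF assms(1) \<open>y \<in> P\<close> assms(2)] by simp
  qed
next
  assume m: "maxP P le x"
  show "maxP P le (\<sigma> x)" unfolding maxP_def
  proof (intro ballI impI)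
    fix y assume "y \<in> P" "le (\<sigma> x) y"
    then obtain z where z: "z \<in> P" "\<sigma> z = y" using aut_surj[OF assms(1)] by blast
    then have "le x z" using autD(2)[OF assms(1) assms(2) z(1)] \<open>le (\<sigma> x) y\<close> by simp
    then have "z = x" using m z(1) unfolding maxP_def by blast
    then show "y = \<sigma> x" using z by simp
  qed
qed

lemma quot_setup:
  assumes fin: "finite P" and pos: "poset P le"
    and iso: "poset_iso (pretract_carrier P le W W_le 2) (quot_le le) C2 C2_le"
  obtains E F where "bip P le E F"
    "\<And>x y. x \<in> E \<Longrightarrow> y \<in> E \<Longrightarrow> psymrel P le W W_le 2 x y"
    "\<And>x y. x \<in> F \<Longrightarrow> y \<in> F \<Longrightarrow> psymrel P le W W_le 2 x y"
    "E \<noteq> {}" "F \<noteq> {}"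
proof -
  let ?R = "psymrel P le W W_le 2"
  define cls where "cls a = {b \<in> P. ?R a b}" for a
  have carr: "pretract_carrier P le W W_le 2 = cls ` P"
    unfolding pretract_carrier_def cls_def by auto
  obtain h where h: "bij_betw h (cls ` P) C2" "\<forall>X\<in>cls ` P. \<forall>Y\<in>cls ` P. quot_le le X Y \<longleftrightarrow> C2_le (h X) (h Y)"
    using iso unfolding poset_iso_def carr by blast
  have "0 \<in> h ` cls ` P" "1 \<in> h ` cls ` P" using bij_betw_imp_surj_on[OF h(1)] by (auto simp: C2_def)
  then obtain a b where ab: "a \<in> P" "h (cls a) = 0" "b \<in> P" "h (cls b) = 1" by auto
  define E where "E = cls a"
  define F where "F = cls b"
  have hinj: "inj_on h (cls ` P)" using h(1) bij_betw_imp_inj_on by blast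
  have refl: "\<And>x. x \<in> P \<Longrightarrow> le x x" using posetD[OF pos] by blast
  have Rrefl: "?R x x" for x unfolding psymrel_def by simp
  have self: "x \<in> cls x" if "x \<in> P" for x using that Rrefl unfolding cls_def by simp
  have clsR: "?R x y" if "x \<in> cls z" "y \<in> cls z" for x y z
  proof -
    have "?R z x" "?R z y" using that unfolding cls_def by auto
    then show ?thesis using psymrel_trans[OF psymrel_sym] by metis
  qed
  have cls_eq: "cls x = cls y" if "?R x y" for x y
  proof -
    have "?R x c \<longleftrightarrow> ?R y c" for c
      using psymrel_trans[OF psymrel_sym[OF that]] psymrel_trans[OF that] by metis
    then show ?thesis unfolding cls_def by simp
  qed
  have EF: "cls x = E \<or> cls x = F" if "x \<in> P" for x
  proof -
    have "h (cls x) \<in> C2" using bij_betwE[OF h(1)] that by blast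
    then have "h (cls x) = h E \<or> h (cls x) = h F" using ab unfolding C2_def E_def F_def by auto
    then show ?thesis using inj_onD[OF hinj] that ab unfolding E_def F_def by blast
  qed
  have qEF: "quot_le le E F" using h(2) ab unfolding E_def F_def C2_le_def by auto
  have nqFE: "\<not> quot_le le F E" using h(2) ab unfolding E_def F_def C2_le_def by auto
  have EsubP: "E \<subseteq> P" "F \<subseteq> P" unfolding E_def F_def cls_def by auto
  have PEF: "P = E \<union> F"
  proof
    show "P \<subseteq> E \<union> F" using EF self by blast
    show "E \<union> F \<subseteq> P" using EsubP by blast
  qed
  have disj: "E \<inter> F = {}"
  proof (rule ccontr)
    assume "E \<inter> F \<noteq> {}"
    then obtain x where "x \<in> E" "x \<in> F" by blast
    then have "?R a x" "?R b x" unfolding E_def F_def cls_def by auto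
    then have "?R a b" using psymrel_trans[OF _ psymrel_sym] by metis
    then have "cls a = cls b" using cls_eq by metis
    then show False using ab by simp
  qed
  have RE: "?R x y" if "x \<in> E" "y \<in> E" for x y using clsR that unfolding E_def by blast
  have RF: "?R x y" if "x \<in> F" "y \<in> F" for x y using clsR that unfolding F_def by blast
  have inv: "\<phi> x = \<phi> y" if inv0: "\<And>\<sigma> z. aut P le \<sigma> \<Longrightarrow> z \<in> P \<Longrightarrow> \<phi> (\<sigma> z) = \<phi> z"
    and xy: "?R x y" "x \<in> P" for \<phi> :: "'a \<Rightarrow> bool" and x y
    using psymrel_inv[OF xy(1) xy(2), of \<phi>] inv0 by metis
  have aE: "a \<in> E" "b \<in> F" using self ab unfolding E_def F_def by auto
  obtain x0 where x0: "x0 \<in> E" "\<forall>y. y \<in> E \<longrightarrow> card {z \<in> P. le z x0} \<le> card {z \<in> P. le z y}"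
    using ex_has_least_nat[of "\<lambda>x. x \<in> E" a "\<lambda>x. card {z \<in> P. le z x}"] aE by blast
  have min0: "minP P le x0" unfolding minP_def
  proof (intro ballI impI)
    fix y assume y: "y \<in> P" "le y x0"
    show "y = x0"
    proof (rule ccontr)
      assume ne: "y \<noteq> x0"
      have x0P: "x0 \<in> P" using x0 EsubP by auto
      show False
      proof (cases "y \<in> F")
        case True
        then show False using nqFE x0 y unfolding quot_le_def by blast
      next
        case False
        then have yE: "y \<in> E" using y PEF by auto
        have sub: "{z \<in> P. le z y} \<subseteq> {z \<in> P. le z x0}"
          using posetD(3)[OF pos] y x0P by blast
        have "x0 \<notin> {z \<in> P. le z y}" using posetD(2)[OF pos] y x0P ne by blast
        moreover have "x0 \<in> {z \<in> P. le z x0}" using x0P refl by simp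
        ultimately have "{z \<in> P. le z y} \<subset> {z \<in> P. le z x0}" using sub by blast
        then have "card {z \<in> P. le z y} < card {z \<in> P. le z x0}"
          using psubset_card_mono fin by (metis (no_types, lifting) finite_subset mem_Collect_eq subsetI)
        then show False using x0(2) yE by (meson not_le)
      qed
    qed
  qed
  have minE: "minP P le x" if "x \<in> E" for x
  proof -
    have v0P: "x0 \<in> P" using x0(1) EsubP by auto
    have "x \<in> P \<and> minP P le x = minP P le x0"
    proof (rule psymrel_inv[of P le W W_le x0 x "minP P le"])
      show "psymrel P le W W_le 2 x0 x" by (rule RE) (use that x0(1) in auto)
      show "x0 \<in> P" by (rule v0P)
      fix \<sigma> z assume "aut P le \<sigma>" "z \<in> P"
      then show "minP P le (\<sigma> z) = minP P le z" by (rule minP_aut)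
    qed
    then show ?thesis using min0 by simp
  qed
  obtain y0 where y0: "y0 \<in> F" "\<forall>y. y \<in> F \<longrightarrow> card {z \<in> P. le y0 z} \<le> card {z \<in> P. le y z}"
    using ex_has_least_nat[of "\<lambda>x. x \<in> F" b "\<lambda>x. card {z \<in> P. le x z}"] aE by blast
  have max0: "maxP P le y0" unfolding maxP_def
  proof (intro ballI impI)
    fix y assume y: "y \<in> P" "le y0 y"
    show "y = y0"
    proof (rule ccontr)
      assume ne: "y \<noteq> y0"
      have y0P: "y0 \<in> P" using y0 EsubP by auto
      show False
      proof (cases "y \<in> E")
        case True
        then show False using nqFE y0 y unfolding quot_le_def by blast
      next
        case False
        then have yF: "y \<in> F" using y PEF by auto
        have sub: "{z \<in> P. le y z} \<subseteq> {z \<in> P. le y0 z}"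
          using posetD(3)[OF pos] y y0P by blast
        have "y0 \<notin> {z \<in> P. le y z}" using posetD(2)[OF pos] y y0P ne by blast
        moreover have "y0 \<in> {z \<in> P. le y0 z}" using y0P refl by simp
        ultimately have "{z \<in> P. le y z} \<subset> {z \<in> P. le y0 z}" using sub by blast
        then have "card {z \<in> P. le y z} < card {z \<in> P. le y0 z}"
          using psubset_card_mono fin by (metis (no_types, lifting) finite_subset mem_Collect_eq subsetI)
        then show False using y0(2) yF by (meson not_le)
      qed
    qed
  qed
  have maxF: "maxP P le x" if "x \<in> F" for x
  proof -
    have v0P: "y0 \<in> P" using y0(1) EsubP by auto
    have "x \<in> P \<and> maxP P le x = maxP P le y0"
    proof (rule psymrel_inv[of P le W W_le y0 x "maxP P le"])
      show "psymrel P le W W_le 2 y0 x" by (rule RF) (use that y0(1) in auto)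
      show "y0 \<in> P" by (rule v0P)
      fix \<sigma> z assume "aut P le \<sigma>" "z \<in> P"
      then show "maxP P le (\<sigma> z) = maxP P le z" by (rule maxP_aut)
    qed
    then show ?thesis using max0 by simp
  qed
  obtain e1 f1 where ef1: "e1 \<in> E" "f1 \<in> F" "le e1 f1" using qEF unfolding quot_le_def by blast
  have "e1 \<noteq> f1" using ef1 disj by auto
  then have nm1: "\<not> maxP P le e1" using ef1 EsubP unfolding maxP_def by auto
  have nmE: "\<not> maxP P le x" if "x \<in> E" for x
  proof -
    have v0P: "e1 \<in> P" using ef1(1) EsubP by auto
    have "x \<in> P \<and> maxP P le x = maxP P le e1"
    proof (rule psymrel_inv[of P le W W_le e1 x "maxP P le"])
      show "psymrel P le W W_le 2 e1 x" by (rule RE) (use that ef1(1) in auto)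
      show "e1 \<in> P" by (rule v0P)
      fix \<sigma> z assume "aut P le \<sigma>" "z \<in> P"
      then show "maxP P le (\<sigma> z) = maxP P le z" by (rule maxP_aut)
    qed
    then show ?thesis using nm1 by simp
  qed
  have bip: "bip P le E F"
  proof
    show "finite P" by fact
    show "P = E \<union> F" by fact
    show "E \<inter> F = {}" by fact
    show "\<And>x. x \<in> P \<Longrightarrow> le x x" by (rule refl)
    fix x y assume xy: "x \<in> P" "y \<in> P" "le x y" "x \<noteq> y"
    have "x \<notin> F" using maxF xy unfolding maxP_def by blast
    moreover have "y \<notin> E" using minE xy unfolding minP_def by blast
    ultimately show "x \<in> E \<and> y \<in> F" using xy PEF by auto
  next
    fix e assume "e \<in> E"
    then obtain y where y: "y \<in> P" "le e y" "y \<noteq> e" using nmE unfolding maxP_def by blast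
    have "y \<notin> E" using minE y \<open>e \<in> E\<close> unfolding minP_def by (metis EsubP(1) subsetD)
    then show "\<exists>f\<in>F. le e f" using y PEF by blast
  qed
  show ?thesis using that[OF bip RE RF] aE by blast
qed



lemma gen_move:
  assumes "psym1 P le Q qle 2 x y"
  shows "\<exists>\<sigma>. is_generator P le Q qle 2 \<sigma> \<and> x \<in> moved P \<sigma> \<and> y \<in> moved P \<sigma>"
proof -
  let ?\<sigma> = "SOME \<sigma>. sym_step P le Q qle 2 \<sigma> x y"
  have st: "sym_step P le Q qle 2 ?\<sigma> x y" by (rule psym1_step[OF assms])
  obtain S i j where "generator_fam P le Q qle 2 ?\<sigma> S" using sym_step2[OF st] by metis
  then have "is_generator P le Q qle 2 ?\<sigma>" unfolding is_generator_def by blast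
  then show ?thesis using sym_step2_mem[OF st] by blast
qed

lemma first_step: "r\<^sup>*\<^sup>* x y \<Longrightarrow> x \<noteq> y \<Longrightarrow> \<exists>w. r x w"
  by (induction rule: converse_rtranclp_induct) auto

lemma rtranclp_none: "(\<And>x y. \<not> r x y) \<Longrightarrow> r\<^sup>*\<^sup>* x y \<Longrightarrow> x = y"
  by (metis first_step)

context bip begin

definition gd :: "'a \<Rightarrow> 'a \<Rightarrow> bool" where
  "gd u v \<longleftrightarrow> (\<forall>e\<in>E. \<exists>e'\<in>E. U e' = tr u v ` U e)"

lemma gd_refl: "gd u u" unfolding gd_def by auto

lemma gd_sym: "gd u v \<Longrightarrow> gd v u" unfolding gd_def by (metis tr_sym)

lemma gd_trans: assumes "gd u v" "gd v w" shows "gd u w"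
proof (cases "u = v \<or> v = w \<or> u = w")
  case True
  then show ?thesis using assms gd_refl by auto
next
  case False
  show ?thesis unfolding gd_def
  proof
    fix e assume "e \<in> E"
    obtain e1 where e1: "e1 \<in> E" "U e1 = tr u v ` U e" using assms(1) \<open>e \<in> E\<close> unfolding gd_def by blast
    obtain e2 where e2: "e2 \<in> E" "U e2 = tr v w ` U e1" using assms(2) e1(1) unfolding gd_def by blast
    obtain e3 where e3: "e3 \<in> E" "U e3 = tr u v ` U e2" using assms(1) e2(1) unfolding gd_def by blast
    have "U e3 = (tr u v \<circ> tr v w \<circ> tr u v) ` U e" using e1 e2 e3 by (simp add: image_comp)
    also have "\<dots> = tr u w ` U e"
    proof -
      have "(tr u v \<circ> tr v w \<circ> tr u v) z = tr u w z" for z using tr_comp[of u v w z] False by simp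
      then have "tr u v \<circ> tr v w \<circ> tr u v = tr u w" by (rule ext)
      then show ?thesis by simp
    qed
    finally show "\<exists>e'\<in>E. U e' = tr u w ` U e" using e3(1) by blast
  qed
qed

lemma gd_of_gen:
  assumes g: "generator_fam P le W W_le 2 \<sigma> S" and x: "x \<in> F" "x \<in> moved P \<sigma>"
  shows "\<sigma> x \<in> F \<and> gd x (\<sigma> x)"
proof -
  obtain a b c where abc: "S 0 = {a,b,c}" "a \<in> E" "b \<in> E" "c \<in> F" "a \<noteq> b" "le a c" "le b c"
    "\<sigma> c \<in> F" "\<sigma> c \<noteq> c" "\<sigma> (\<sigma> c) = c" "\<And>f. f \<in> F \<Longrightarrow> \<sigma> f = tr c (\<sigma> c) f"
    by (rule wgen[OF g]) (rule that; assumption)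
  have aut: "aut P le \<sigma>" using gen_famD(1)[OF g] .
  have gdc: "gd c (\<sigma> c)" unfolding gd_def
  proof
    fix e assume e: "e \<in> E"
    have "U (\<sigma> e) = \<sigma> ` U e" using aut_U[OF aut e] .
    also have "\<dots> = tr c (\<sigma> c) ` U e"
    proof (rule image_cong)
      fix f assume "f \<in> U e"
      then have "f \<in> F" using U_sub by blast
      then show "\<sigma> f = tr c (\<sigma> c) f" by (rule abc(11))
    qed (rule HOL.refl)
    finally show "\<exists>e'\<in>E. U e' = tr c (\<sigma> c) ` U e" using aut_E[OF aut e] by blast
  qed
  have "\<sigma> x \<noteq> x" using x(2) by (simp add: moved_def)
  moreover have "\<sigma> x = tr c (\<sigma> c) x" by (rule abc(11)[OF x(1)])
  ultimately have "x = c \<or> x = \<sigma> c" by (metis tr_o)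
  then show ?thesis
  proof
    assume xc: "x = c"
    show ?thesis unfolding xc using gdc abc(8) by blast
  next
    assume xc: "x = \<sigma> c"
    show ?thesis unfolding xc abc(10) using gd_sym[OF gdc] abc(4) by blast
  qed
qed

lemma gd_step:
  assumes "psym1 P le W W_le 2 x y" "x \<in> F"
  shows "y \<in> F \<and> gd x y"
proof -
  obtain \<sigma> where st: "sym_step P le W W_le 2 \<sigma> x y" using assms(1) unfolding psym1_def by blast
  obtain S i j where g: "generator_fam P le W W_le 2 \<sigma> S" using sym_step2[OF st] by metis
  note m = sym_step2_mem[OF st]
  have "\<sigma> x \<in> F \<and> gd x (\<sigma> x)" using gd_of_gen[OF g assms(2) m(1)] .
  then show ?thesis using m(3) by metis
qed

lemma gd_step':
  assumes "psym1 P le W W_le 2 z y" "y \<in> F"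
  shows "z \<in> F \<and> gd z y"
proof -
  obtain \<sigma> where st: "sym_step P le W W_le 2 \<sigma> z y" using assms(1) unfolding psym1_def by blast
  note m = sym_step2_mem[OF st]
  have "\<sigma> z \<in> F" using m(3) assms(2) by metis
  then have "z \<in> F" using aut_F_iff[OF m(4) m(5)] by blast
  then show ?thesis using gd_step[OF assms(1)] by blast
qed

lemma gd_all:
  assumes RF: "\<And>x y. x \<in> F \<Longrightarrow> y \<in> F \<Longrightarrow> psymrel P le W W_le 2 x y"
    and uv: "u \<in> F" "v \<in> F"
  shows "gd u v"
proof -
  have "psymrel P le W W_le 2 u v" using RF uv by blast
  then have "v \<in> F \<and> gd u v" unfolding psymrel_def
  proof (induction rule: rtranclp_induct)
    case base
    then show ?case using uv gd_refl by simp
  next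
    case (step y z)
    then have yF: "y \<in> F" and gy: "gd u y" by auto
    from step.hyps(2) have "psym1 P le W W_le 2 y z \<or> psym1 P le W W_le 2 z y" by auto
    then show ?case
    proof
      assume "psym1 P le W W_le 2 y z"
      then show ?thesis using gd_step yF gy gd_trans by blast
    next
      assume "psym1 P le W W_le 2 z y"
      then have "z \<in> F \<and> gd z y" using gd_step' yF by blast
      then show ?thesis using gy gd_trans gd_sym by blast
    qed
  qed
  then show ?thesis by simp
qed

lemma all_subsets:
  assumes gda: "\<And>u v. u \<in> F \<Longrightarrow> v \<in> F \<Longrightarrow> gd u v"
  shows "\<forall>X Y. (\<exists>e\<in>E. U e = X) \<longrightarrow> Y \<subseteq> F \<longrightarrow> card Y = card X \<longrightarrow> card (X - Y) = n
      \<longrightarrow> (\<exists>e\<in>E. U e = Y)"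
proof (induction n)
  case 0
  show ?case
  proof (intro allI impI)
    fix X Y assume h: "\<exists>e\<in>E. U e = X" "Y \<subseteq> F" "card Y = card X" "card (X - Y) = 0"
    have fX: "finite X" using h(1) finU by blast
    have fY: "finite Y" using h(2) finF finite_subset by blast
    have "X \<subseteq> Y" using h(4) fX by simp
    then have "X = Y" using card_subset_eq[OF fY] h(3) by simp
    then show "\<exists>e\<in>E. U e = Y" using h(1) by simp
  qed
next
  case (Suc n)
  show ?case
  proof (intro allI impI)
    fix X Y assume h: "\<exists>e\<in>E. U e = X" "Y \<subseteq> F" "card Y = card X" "card (X - Y) = Suc n"
    obtain e where e: "e \<in> E" "U e = X" using h(1) by blast
    have XF: "X \<subseteq> F" using e U_sub by blast
    have fX: "finite X" using e finU by blast
    have fY: "finite Y" using h(2) finF finite_subset by blast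
    have cXY: "card (X - Y) = card X - card (X \<inter> Y)" using card_Diff_subset_Int fX by (simp add: card_Diff_subset_Int)
    have cYX: "card (Y - X) = card Y - card (Y \<inter> X)" using fY by (simp add: card_Diff_subset_Int)
    have "card (Y - X) = card (X - Y)" using cXY cYX h(3) by (simp add: Int_commute)
    then have "X - Y \<noteq> {}" "Y - X \<noteq> {}" using h(4) by (metis card.empty nat.distinct(1))+
    then obtain u v where u: "u \<in> X" "u \<notin> Y" and v: "v \<in> Y" "v \<notin> X" by blast
    have uv: "u \<in> F" "v \<in> F" using u v XF h(2) by auto
    obtain e' where e': "e' \<in> E" "U e' = tr u v ` X" using gda[OF uv] e unfolding gd_def by metis
    have X': "tr u v ` X = insert v (X - {u})"
    proof
      show "tr u v ` X \<subseteq> insert v (X - {u})"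
      proof
        fix z assume "z \<in> tr u v ` X"
        then obtain w where w: "w \<in> X" "z = tr u v w" by blast
        then show "z \<in> insert v (X - {u})" using u v by (cases "w = u") (auto simp: tr_def)
      qed
      show "insert v (X - {u}) \<subseteq> tr u v ` X"
      proof
        fix z assume z: "z \<in> insert v (X - {u})"
        show "z \<in> tr u v ` X"
        proof (cases "z = v")
          case True
          then show ?thesis using u(1) by (metis imageI tr_u)
        next
          case False
          then have "z \<in> X" "z \<noteq> u" using z by auto
          moreover have "z \<noteq> v" by fact
          ultimately show ?thesis by (metis imageI tr_o)
        qed
      qed
    qed
    have "card (tr u v ` X) = card X" by simp
    moreover have "tr u v ` X - Y = (X - Y) - {u}" using X' v u by auto
    then have "card (tr u v ` X - Y) = n" using h(4) u fX by simp
    ultimately show "\<exists>e\<in>E. U e = Y" using Suc.IH e' h(2,3) by metis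
  qed
qed

end


context bip begin

lemma trfix: assumes "u \<in> X \<longleftrightarrow> v \<in> X" shows "tr u v ` X = X"
proof -
  have *: "tr u v x \<in> X" if "x \<in> X" for x
  proof (cases "x = u \<or> x = v")
    case True
    then have "u \<in> X" "v \<in> X" using that assms by blast+
    then show ?thesis using True by (metis tr_u tr_v)
  next
    case False
    then show ?thesis using that by simp
  qed
  show ?thesis
  proof
    show "tr u v ` X \<subseteq> X" using * by blast
    show "X \<subseteq> tr u v ` X"
    proof
      fix x assume "x \<in> X"
      then have "tr u v x \<in> X" by (rule *)
      moreover have "x = tr u v (tr u v x)" by simp
      ultimately show "x \<in> tr u v ` X" by blast
    qed
  qed
qed

lemma forward_core:
  assumes RE: "\<And>x y. x \<in> E \<Longrightarrow> y \<in> E \<Longrightarrow> psymrel P le W W_le 2 x y"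
    and RF: "\<And>x y. x \<in> F \<Longrightarrow> y \<in> F \<Longrightarrow> psymrel P le W W_le 2 x y"
    and Ene: "E \<noteq> {}" and Fne: "F \<noteq> {}"
    and notC2: "\<not> poset_iso P le C2 C2_le"
  shows "poset_iso P le S3_12 S3_12_le"
proof -
  have ex: "\<exists>x y. psym1 P le W W_le 2 x y"
  proof (rule ccontr)
    assume no: "\<not> (\<exists>x y. psym1 P le W W_le 2 x y)"
    have no2: "\<not> (sup (psym1 P le W W_le 2) (conversep (psym1 P le W W_le 2))) x y" for x y
      using no unfolding sup_fun_def sup_bool_def conversep_iff by blast
    have Req: "x = y" if "psymrel P le W W_le 2 x y" for x y
    proof -
      have "(sup (psym1 P le W W_le 2) (conversep (psym1 P le W W_le 2)))\<^sup>*\<^sup>* x y"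
        using that unfolding psymrel_def .
      then show ?thesis by (rule rtranclp_none[OF no2])
    qed
    obtain e where e: "e \<in> E" using Ene by blast
    obtain f where f: "f \<in> F" "le e f" using up[OF e] by blast
    have E1: "E = {e}"
    proof
      show "E \<subseteq> {e}"
      proof
        fix x assume "x \<in> E"
        then have "e = x" by (rule Req[OF RE[OF e]])
        then show "x \<in> {e}" by simp
      qed
      show "{e} \<subseteq> E" using e by simp
    qed
    have F1: "F = {f}"
    proof
      show "F \<subseteq> {f}"
      proof
        fix x assume "x \<in> F"
        then have "f = x" by (rule Req[OF RF[OF f(1)]])
        then show "x \<in> {f}" by simp
      qed
      show "{f} \<subseteq> F" using f by simp
    qed
    have ef: "e \<noteq> f" using e f E_notF by blast
    have P2: "P = {e, f}" using PEF E1 F1 by auto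
    define \<phi> where "\<phi> x = (if x = e then 0 else 1::nat)" for x
    have "inj_on \<phi> P" unfolding P2 \<phi>_def inj_on_def using ef by simp
    moreover have "\<phi> ` P = C2" unfolding P2 C2_def \<phi>_def using ef by auto
    ultimately have "bij_betw \<phi> P C2" unfolding bij_betw_def by simp
    moreover have "\<forall>x\<in>P. \<forall>y\<in>P. le x y \<longleftrightarrow> C2_le (\<phi> x) (\<phi> y)"
    proof (intro ballI)
      fix x y assume "x \<in> P" "y \<in> P"
      then have xy: "x = e \<or> x = f" "y = e \<or> y = f" using P2 by auto
      have r: "le e e" "le f f" using refl P2 by auto
      have n: "\<not> le f e" using le_FE f e by blast
      show "le x y \<longleftrightarrow> C2_le (\<phi> x) (\<phi> y)"
        using xy r n f(2) ef unfolding C2_le_def \<phi>_def by (elim disjE) simp_all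
    qed
    ultimately show False using notC2 unfolding poset_iso_def by blast
  qed
  then obtain x0 y0 where p0: "psym1 P le W W_le 2 x0 y0" by blast
  then obtain A0 \<sigma>0 where A0: "A0 \<subseteq> P" "poset_iso A0 le W W_le"
      "\<not> composite P le W W_le 2 (sym_set P le W W_le 2 A0)"
      "sym_step P le W W_le 2 \<sigma>0 x0 y0"
    unfolding psym1_def by blast
  obtain S0 i0 j0 where g0: "generator_fam P le W W_le 2 \<sigma>0 S0" using sym_step2[OF A0(4)] by metis
  obtain a b c where abc: "S0 0 = {a,b,c}" "a \<in> E" "b \<in> E" "c \<in> F" "a \<noteq> b" "le a c" "le b c"
    "\<sigma>0 c \<in> F" "\<sigma>0 c \<noteq> c" "\<sigma>0 (\<sigma>0 c) = c" "\<And>f. f \<in> F \<Longrightarrow> \<sigma>0 f = tr c (\<sigma>0 c) f"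
    by (rule wgen[OF g0]) (rule that; assumption)
  note G0 = gen_famD[OF g0]
  have aut0: "aut P le \<sigma>0" by (rule G0(1))
  have moveP: "\<exists>\<tau>. is_generator P le W W_le 2 \<tau> \<and> z \<in> moved P \<tau>" if z: "z \<in> P" for z
  proof -
    have "\<exists>z'. z' \<noteq> z \<and> psymrel P le W W_le 2 z z'"
    proof (cases "z \<in> E")
      case True
      have "a \<noteq> z \<or> b \<noteq> z" using abc(5) by blast
      then show ?thesis using RE True abc(2,3) by blast
    next
      case False
      then have zF: "z \<in> F" using z PEF by blast
      have "c \<noteq> z \<or> \<sigma>0 c \<noteq> z" using abc(9) by metis
      then show ?thesis using RF zF abc(4,8) by blast
    qed
    then obtain z' where "z' \<noteq> z" "psymrel P le W W_le 2 z z'" by blast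
    then obtain w where "(sup (psym1 P le W W_le 2) (conversep (psym1 P le W W_le 2))) z w"
      unfolding psymrel_def using first_step by metis
    then have "psym1 P le W W_le 2 z w \<or> psym1 P le W W_le 2 w z" by auto
    then show ?thesis using gen_move by metis
  qed
  obtain aA bA cA where Aelts: "A0 = {aA, bA, cA}" "aA \<in> E" "bA \<in> E" "cA \<in> F" "aA \<noteq> bA"
      "le aA cA" "le bA cA"
    by (rule iso_W_elems[OF A0(2) A0(1)]) (rule that; assumption)
  have allsym: "\<exists>a\<in>A0. symrel P le W W_le 2 a b" if "b \<in> P" for b
  proof (cases "b \<in> E")
    case True
    then show ?thesis using psymrel_symrel[OF RE[OF Aelts(2) True]] Aelts(1) by blast
  next
    case False
    then have "b \<in> F" using that PEF by blast
    then show ?thesis using psymrel_symrel[OF RF[OF Aelts(4)]] Aelts(1) by blast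
  qed
  have SP: "sym_set P le W W_le 2 A0 = P"
  proof
    show "sym_set P le W W_le 2 A0 \<subseteq> P" unfolding sym_set_def by blast
    show "P \<subseteq> sym_set P le W W_le 2 A0"
    proof
      fix z assume z: "z \<in> P"
      obtain \<tau> where \<tau>: "is_generator P le W W_le 2 \<tau>" "z \<in> moved P \<tau>" using moveP[OF z] by blast
      have adm: "\<tau> \<in> adm_gens P le W W_le 2 A0" unfolding adm_gens_def using \<tau>(1) allsym by blast
      have "\<tau> \<circ> id \<in> gen_closure (adm_gens P le W W_le 2 A0)"
        by (rule gen_closure.gc_comp[OF adm gen_closure.gc_id])
      then have "\<tau> \<in> sym_group P le W W_le 2 A0" unfolding sym_group_def by simp
      moreover have "\<tau> z \<noteq> z" using \<tau>(2) by (simp add: moved_def)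
      ultimately show "z \<in> sym_set P le W W_le 2 A0" unfolding sym_set_def using z by blast
    qed
  qed
  have notwin: "e = e'" if "e \<in> E" "e' \<in> E" "U e = U e'" for e e'
  proof (rule ccontr)
    assume "e \<noteq> e'"
    then have "composite P le W W_le 2 P" using twin_composite that by blast
    then show False using A0(3) SP by simp
  qed
  have gda: "gd u v" if "u \<in> F" "v \<in> F" for u v using gd_all[OF RF that] .
  define d where "d = card (U a)"
  have degs: "card (U e) = d" if e: "e \<in> E" for e
  proof -
    define \<phi> where "\<phi> x = (if x \<in> E then card (U x) else 0)" for x
    have "e \<in> P \<and> \<phi> e = \<phi> a"
    proof (rule psymrel_inv[of P le W W_le a e \<phi>])
      show "psymrel P le W W_le 2 a e" by (rule RE[OF abc(2) e])
      show "a \<in> P" using abc(2) EP by blast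
      fix \<sigma> z assume "aut P le \<sigma>" "z \<in> P"
      then show "\<phi> (\<sigma> z) = \<phi> z" unfolding \<phi>_def using aut_E_iff card_U_aut by auto
    qed
    then show ?thesis using e abc(2) unfolding \<phi>_def d_def by simp
  qed
  have allsub: "\<exists>e\<in>E. U e = Y" if "Y \<subseteq> F" "card Y = d" for Y
  proof -
    have "\<exists>e\<in>E. U e = U a" using abc(2) by blast
    then show ?thesis using all_subsets[OF gda, rule_format, of "U a" Y] that unfolding d_def by blast
  qed
  define c' where "c' = \<sigma>0 c"
  define N where "N = {e \<in> E. c \<in> U e \<and> c' \<notin> U e}"
  have Usig: "U (\<sigma>0 e) = tr c c' ` U e" if "e \<in> E" for e
  proof -
    have "U (\<sigma>0 e) = \<sigma>0 ` U e" using aut_U[OF aut0 that] .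
    also have "\<dots> = tr c c' ` U e"
    proof (rule image_cong)
      fix f assume "f \<in> U e"
      then have "f \<in> F" using U_sub by blast
      then show "\<sigma>0 f = tr c c' f" unfolding c'_def by (rule abc(11))
    qed (rule HOL.refl)
    finally show ?thesis .
  qed
  have cc': "c \<noteq> c'" "c' \<in> F" using abc(8,9) unfolding c'_def by auto
  have xN: "x \<in> N" if x: "x \<in> {a,b}" for x
  proof -
    have xE: "x \<in> E" using x abc(2,3) by blast
    have cx: "c \<in> U x" using x abc(4,6,7) unfolding U_def by blast
    moreover have "c' \<notin> U x"
    proof
      assume "c' \<in> U x"
      then have "tr c c' ` U x = U x" using trfix cx by metis
      then have "U (\<sigma>0 x) = U x" using Usig[OF xE] by simp
      then have "\<sigma>0 x = x" using notwin aut_E[OF aut0 xE] xE by blast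
      moreover have "x \<in> moved P \<sigma>0" using x G0(2) abc(1) by blast
      ultimately show False by (simp add: moved_def)
    qed
    ultimately show ?thesis unfolding N_def using xE by blast
  qed
  have Nsub: "N \<subseteq> {a,b}"
  proof
    fix e assume "e \<in> N"
    then have e: "e \<in> E" "c \<in> U e" "c' \<notin> U e" unfolding N_def by auto
    have "\<sigma>0 e \<noteq> e"
    proof
      assume "\<sigma>0 e = e"
      then have "U e = tr c c' ` U e" using Usig[OF e(1)] by simp
      moreover have "c' \<in> tr c c' ` U e" using e(2) by (metis imageI tr_u)
      ultimately show False using e(3) by simp
    qed
    then have "e \<in> moved P \<sigma>0" using e(1) EP unfolding moved_def by blast
    then have "e \<in> S0 0 \<or> e \<in> S0 1" using G0(6) by blast
    then show "e \<in> {a,b}"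
    proof
      assume "e \<in> S0 0" then show ?thesis using abc(1) e(1) abc(4) E_notF by auto
    next
      assume "e \<in> S0 1"
      then obtain w where w: "w \<in> {a,b,c}" "e = \<sigma>0 w" using G0(4) abc(1) by blast
      show ?thesis
      proof (cases "w = c")
        case True
        then have "e \<in> F" using w abc(8) by simp
        then show ?thesis using e(1) E_notF by blast
      next
        case False
        then have wE: "w \<in> E" "c \<in> U w" using w abc(2,3,4,6,7) unfolding U_def by auto
        then have "c' \<in> U e" using Usig[OF wE(1)] w(2) by (metis imageI tr_u)
        then show ?thesis using e(3) by blast
      qed
    qed
  qed
  have Neq: "N = {a,b}" using Nsub xN by blast
  have cN: "card N = 2" using Neq abc(5) by simp
  define XS where "XS = {X. X \<subseteq> F \<and> card X = d \<and> c \<in> X \<and> c' \<notin> X}"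
  have bUN: "bij_betw U N XS"
  proof -
    have "inj_on U N" using notwin unfolding N_def inj_on_def by blast
    moreover have "U ` N = XS"
    proof
      show "U ` N \<subseteq> XS" using U_sub degs unfolding N_def XS_def by blast
      show "XS \<subseteq> U ` N"
      proof
        fix X assume "X \<in> XS"
        then have X: "X \<subseteq> F" "card X = d" "c \<in> X" "c' \<notin> X" unfolding XS_def by auto
        obtain e where "e \<in> E" "U e = X" using allsub X(1,2) by blast
        then show "X \<in> U ` N" using X unfolding N_def by blast
      qed
    qed
    ultimately show ?thesis by (simp add: bij_betw_def)
  qed
  then have cXS: "card XS = 2" using cN bij_betw_same_card by metis
  have "c \<in> U a" using xN unfolding N_def by blast
  then have d1: "d \<ge> 1" unfolding d_def using finU by (metis card_0_eq empty_iff less_one not_le)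
  define YS where "YS = {Y. Y \<subseteq> F - {c, c'} \<and> card Y = d - 1}"
  have "bij_betw (insert c) YS XS"
  proof -
    have "inj_on (insert c) YS" unfolding inj_on_def YS_def by blast
    moreover have "insert c ` YS = XS"
    proof
      show "insert c ` YS \<subseteq> XS"
      proof
        fix X assume "X \<in> insert c ` YS"
        then obtain Y where Y: "Y \<subseteq> F - {c,c'}" "card Y = d - 1" "X = insert c Y" unfolding YS_def by blast
        have "finite Y" using Y(1) finF finite_subset by blast
        moreover have "c \<notin> Y" using Y(1) by blast
        ultimately have "card X = d" using Y d1 by simp
        then show "X \<in> XS" using Y cc' abc(4) unfolding XS_def by auto
      qed
      show "XS \<subseteq> insert c ` YS"
      proof
        fix X assume "X \<in> XS"
        then have X: "X \<subseteq> F" "card X = d" "c \<in> X" "c' \<notin> X" unfolding XS_def by auto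
        have "finite X" using X(1) finF finite_subset by blast
        then have "card (X - {c}) = d - 1" using X(2,3) by simp
        then have "X - {c} \<in> YS" using X unfolding YS_def by auto
        moreover have "X = insert c (X - {c})" using X(3) by blast
        ultimately show "X \<in> insert c ` YS" by blast
      qed
    qed
    ultimately show ?thesis by (simp add: bij_betw_def)
  qed
  then have c1: "card YS = 2" using cXS bij_betw_same_card by metis
  have c2: "card YS = card (F - {c,c'}) choose (d - 1)" unfolding YS_def
    by (rule n_subsets) (use finF in simp)
  have c3: "card (F - {c,c'}) = card F - 2"
    using card_Diff_subset[of "{c,c'}" F] cc' abc(4) finF by simp
  have "card F - 2 = 2 \<and> d - 1 = 1" using binom_2 c1 c2 c3 by metis
  then have cF: "card F = 4" and d2: "d = 2" using d1 by auto
  show ?thesis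
  proof (rule std_iso)
    show "card F = 4" by (rule cF)
    show "\<forall>e\<in>E. card (U e) = 2" using degs d2 by simp
    show "inj_on U E" using notwin unfolding inj_on_def by blast
    show "\<forall>Y. Y \<subseteq> F \<longrightarrow> card Y = 2 \<longrightarrow> (\<exists>e\<in>E. U e = Y)" using allsub d2 by simp
  qed
qed

end


locale std = bip +
  assumes cF: "card F = 4" and cU: "\<And>e. e \<in> E \<Longrightarrow> card (U e) = 2" and iU: "inj_on U E"
    and sU: "\<And>Y. Y \<subseteq> F \<Longrightarrow> card Y = 2 \<Longrightarrow> \<exists>e\<in>E. U e = Y"

lemma iso_std:
  assumes pos: "poset P le" and iso: "poset_iso P le S3_12 S3_12_le"
  shows "\<exists>E F. std P le E F"
proof -
  define N4 where "N4 = {1,2,3,4::nat}"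
  have fN: "finite N4" and cN: "card N4 = 4" unfolding N4_def by simp_all
  have S3: "S3_12 = {S. S \<subseteq> N4 \<and> (card S = 2 \<or> card S = 3)}" unfolding S3_12_def N4_def by simp
  obtain \<phi> where \<phi>: "bij_betw \<phi> P S3_12" "\<forall>x\<in>P. \<forall>y\<in>P. le x y \<longleftrightarrow> \<phi> x \<subseteq> \<phi> y"
    using iso unfolding poset_iso_def S3_12_le_def by blast
  have \<phi>inj: "inj_on \<phi> P" using \<phi>(1) bij_betw_imp_inj_on by blast
  have \<phi>img: "\<phi> ` P = S3_12" using \<phi>(1) bij_betw_imp_surj_on by blast
  have \<phi>S: "\<phi> x \<subseteq> N4" "card (\<phi> x) = 2 \<or> card (\<phi> x) = 3" if "x \<in> P" for x
    using \<phi>img that unfolding S3 by blast+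
  have \<phi>fin: "finite (\<phi> x)" if "x \<in> P" for x using \<phi>S(1)[OF that] fN finite_subset by blast
  have finS: "finite S3_12" unfolding S3 using fN by (simp add: finite_subset[of _ "Pow N4"] subset_eq)
  have finP: "finite P" using bij_betw_finite[OF \<phi>(1)] finS by simp
  have preim: "\<exists>x\<in>P. \<phi> x = T" if "T \<subseteq> N4" "card T = 2 \<or> card T = 3" for T
  proof -
    have "T \<in> \<phi> ` P" unfolding \<phi>img S3 using that by blast
    then show ?thesis by blast
  qed
  define E where "E = {x \<in> P. card (\<phi> x) = 2}"
  define F where "F = {x \<in> P. card (\<phi> x) = 3}"
  have refl: "le x x" if "x \<in> P" for x using posetD(1)[OF pos that] .
  have bip: "bip P le E F"
  proof
    show "finite P" by (rule finP)
    show "P = E \<union> F" unfolding E_def F_def using \<phi>S(2) by blast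
    show "E \<inter> F = {}" unfolding E_def F_def by auto
    show "\<And>x. x \<in> P \<Longrightarrow> le x x" by (rule refl)
  next
    fix x y assume xy: "x \<in> P" "y \<in> P" "le x y" "x \<noteq> y"
    have sub: "\<phi> x \<subseteq> \<phi> y" using \<phi>(2) xy by blast
    have "\<phi> x \<noteq> \<phi> y" using \<phi>inj xy inj_on_eq_iff by metis
    then have "\<phi> x \<subset> \<phi> y" using sub by blast
    then have "card (\<phi> x) < card (\<phi> y)" using psubset_card_mono \<phi>fin xy(2) by blast
    then show "x \<in> E \<and> y \<in> F" using \<phi>S(2)[OF xy(1)] \<phi>S(2)[OF xy(2)] xy unfolding E_def F_def by auto
  next
    fix e assume e: "e \<in> E"
    then have eP: "e \<in> P" and c2: "card (\<phi> e) = 2" unfolding E_def by auto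
    have "card (N4 - \<phi> e) = 2" using card_Diff_subset[OF \<phi>fin[OF eP] \<phi>S(1)[OF eP]] c2 cN by simp
    then obtain j where j: "j \<in> N4" "j \<notin> \<phi> e" by (metis Diff_iff card.empty ex_in_conv zero_neq_numeral)
    have "card (insert j (\<phi> e)) = 3" using j c2 \<phi>fin[OF eP] by simp
    moreover have "insert j (\<phi> e) \<subseteq> N4" using j \<phi>S(1)[OF eP] by simp
    ultimately obtain f where f: "f \<in> P" "\<phi> f = insert j (\<phi> e)" using preim by metis
    then have "f \<in> F" using \<open>card (insert j (\<phi> e)) = 3\<close> unfolding F_def by simp
    moreover have "le e f" using \<phi>(2) eP f by auto
    ultimately show "\<exists>f\<in>F. le e f" by blast
  qed
  interpret bip P le E F by (rule bip)
  define \<psi> where "\<psi> f = (SOME j. j \<in> N4 \<and> j \<notin> \<phi> f)" for f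
  have \<psi>: "\<psi> f \<in> N4" "N4 - \<phi> f = {\<psi> f}" if f: "f \<in> F" for f
  proof -
    have fP: "f \<in> P" and c3: "card (\<phi> f) = 3" using f unfolding F_def by auto
    have "card (N4 - \<phi> f) = 1" using card_Diff_subset[OF \<phi>fin[OF fP] \<phi>S(1)[OF fP]] c3 cN by simp
    then obtain j where j: "N4 - \<phi> f = {j}" using card_1_singletonE by blast
    then have "j \<in> N4 \<and> j \<notin> \<phi> f" by blast
    moreover have "\<And>i. i \<in> N4 \<and> i \<notin> \<phi> f \<Longrightarrow> i = j" using j by blast
    ultimately have "\<psi> f = j" unfolding \<psi>_def by (metis (mono_tags, lifting) someI)
    then show "\<psi> f \<in> N4" "N4 - \<phi> f = {\<psi> f}" using j by auto
  qed
  have \<phi>F: "\<phi> f = N4 - {\<psi> f}" if "f \<in> F" for f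
    using \<psi>(2)[OF that] \<phi>S(1) that FP by blast
  have \<psi>inj: "inj_on \<psi> F"
  proof (rule inj_onI)
    fix f f' assume "f \<in> F" "f' \<in> F" "\<psi> f = \<psi> f'"
    then have "\<phi> f = \<phi> f'" using \<phi>F by metis
    then show "f = f'" using \<phi>inj \<open>f \<in> F\<close> \<open>f' \<in> F\<close> FP inj_on_eq_iff by metis
  qed
  have \<psi>surj: "\<psi> ` F = N4"
  proof
    show "\<psi> ` F \<subseteq> N4" using \<psi>(1) by blast
    show "N4 \<subseteq> \<psi> ` F"
    proof
      fix j assume j: "j \<in> N4"
      have "card (N4 - {j}) = 3" using j cN fN by simp
      then obtain f where f: "f \<in> P" "\<phi> f = N4 - {j}" using preim by (metis Diff_subset)
      then have fF: "f \<in> F" using \<open>card (N4 - {j}) = 3\<close> unfolding F_def by simp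
      have "{\<psi> f} = N4 - \<phi> f" using \<psi>(2)[OF fF] by simp
      also have "\<dots> = {j}" using f j by blast
      finally show "j \<in> \<psi> ` F" using fF by blast
    qed
  qed
  have cardF: "card F = 4" using card_image[OF \<psi>inj] \<psi>surj cN by simp
  have leEF: "le e f \<longleftrightarrow> \<psi> f \<notin> \<phi> e" if "e \<in> E" "f \<in> F" for e f
  proof -
    have "le e f \<longleftrightarrow> \<phi> e \<subseteq> \<phi> f" using \<phi>(2) that EP FP by blast
    also have "\<dots> \<longleftrightarrow> \<phi> e \<subseteq> N4 - {\<psi> f}" using \<phi>F that by simp
    also have "\<dots> \<longleftrightarrow> \<psi> f \<notin> \<phi> e" using \<phi>S(1) that EP by blast
    finally show ?thesis .
  qed
  have \<psi>U: "\<psi> ` U e = N4 - \<phi> e" if e: "e \<in> E" for e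
  proof
    show "\<psi> ` U e \<subseteq> N4 - \<phi> e" using leEF[OF e] \<psi>(1) unfolding U_def by auto
    show "N4 - \<phi> e \<subseteq> \<psi> ` U e"
    proof
      fix j assume j: "j \<in> N4 - \<phi> e"
      then obtain f where f: "f \<in> F" "\<psi> f = j" using \<psi>surj by blast
      then have "f \<in> U e" using leEF[OF e f(1)] j unfolding U_def by simp
      then show "j \<in> \<psi> ` U e" using f by blast
    qed
  qed
  have cardU: "card (U e) = 2" if e: "e \<in> E" for e
  proof -
    have eP: "e \<in> P" and c2: "card (\<phi> e) = 2" using e unfolding E_def by auto
    have "card (U e) = card (\<psi> ` U e)" using card_image[OF inj_on_subset[OF \<psi>inj U_sub]] by simp
    also have "\<dots> = card (N4 - \<phi> e)" using \<psi>U[OF e] by simp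
    also have "\<dots> = 2" using card_Diff_subset[OF \<phi>fin[OF eP] \<phi>S(1)[OF eP]] c2 cN by simp
    finally show ?thesis .
  qed
  have injU: "inj_on U E"
  proof (rule inj_onI)
    fix e e' assume ee: "e \<in> E" "e' \<in> E" "U e = U e'"
    then have "N4 - \<phi> e = N4 - \<phi> e'" using \<psi>U by metis
    then have "\<phi> e = \<phi> e'" using \<phi>S(1) ee EP by blast
    then show "e = e'" using \<phi>inj ee EP inj_on_eq_iff by metis
  qed
  have surjU: "\<exists>e\<in>E. U e = Y" if Y: "Y \<subseteq> F" "card Y = 2" for Y
  proof -
    define S where "S = N4 - \<psi> ` Y"
    have "card (\<psi> ` Y) = 2" using card_image[OF inj_on_subset[OF \<psi>inj Y(1)]] Y(2) by simp
    moreover have sY: "\<psi> ` Y \<subseteq> N4" using Y(1) \<psi>(1) by blast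
    ultimately have "card S = 2" unfolding S_def using card_Diff_subset[OF finite_subset[OF sY fN] sY] cN by simp
    moreover have "S \<subseteq> N4" unfolding S_def by blast
    ultimately obtain e where e: "e \<in> P" "\<phi> e = S" using preim by metis
    then have eE: "e \<in> E" using \<open>card S = 2\<close> unfolding E_def by simp
    have "\<psi> ` U e = \<psi> ` Y" using \<psi>U[OF eE] e(2) sY unfolding S_def by blast
    then have "U e = Y" using inj_on_image_eq_iff[OF \<psi>inj U_sub Y(1)] by simp
    then show ?thesis using eE by blast
  qed
  have "std P le E F"
    by (unfold_locales) (use cardF cardU injU surjU in auto)
  then show ?thesis by blast
qed



lemma gen_closure_moves:
  assumes "g \<in> gen_closure G" "g x \<noteq> x" shows "\<exists>\<sigma>\<in>G. \<sigma> x \<noteq> x"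
  using assms by (induction rule: gen_closure.induct) (auto, metis)

context bip begin

lemma funpow_PE:
  assumes "aut P le \<tau>" "y \<in> P"
  shows "(\<tau> ^^ i) y \<in> P \<and> ((\<tau> ^^ i) y \<in> E \<longleftrightarrow> y \<in> E)"
proof (induction i)
  case 0
  then show ?case using assms(2) by simp
next
  case (Suc i)
  then show ?case using aut_mem[OF assms(1)] aut_E_iff[OF assms(1)] by simp
qed

lemma inv_orbit:
  assumes "aut P le \<tau>" "\<And>e. e \<in> E \<Longrightarrow> R (\<tau> e) \<longleftrightarrow> R e" "x \<in> E"
  shows "(\<tau> ^^ i) x \<in> E \<and> (R ((\<tau> ^^ i) x) \<longleftrightarrow> R x)"
proof (induction i)
  case 0
  then show ?case using assms(3) by simp
next
  case (Suc i)
  then show ?case using aut_E[OF assms(1)] assms(2) by simp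
qed

end

context std begin

lemma finF4: "finite F" by (rule finF)

lemma pair_e: assumes "p \<in> F" "q \<in> F" "p \<noteq> q" shows "\<exists>e\<in>E. U e = {p, q}"
  using sU[of "{p,q}"] assms by simp

lemma fourth: assumes "a \<in> F" "b \<in> F" "c \<in> F" "a \<noteq> b" "a \<noteq> c" "b \<noteq> c"
  obtains w where "w \<in> F" "F = {a,b,c,w}" "w \<noteq> a" "w \<noteq> b" "w \<noteq> c"
proof -
  have "card (F - {a,b,c}) = 1" using card_Diff_subset[of "{a,b,c}" F] assms cF finF by simp
  then obtain w where w: "F - {a,b,c} = {w}" using card_1_singletonE by blast
  then have "F = {a,b,c,w}" using assms by blast
  then show ?thesis using that w by blast
qed

lemma third: assumes "a \<in> F" "b \<in> F" "a \<noteq> b"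
  obtains w z where "F = {a,b,w,z}" "w \<in> F" "z \<in> F" "w \<noteq> a" "w \<noteq> b" "z \<noteq> a" "z \<noteq> b" "w \<noteq> z"
proof -
  have "card (F - {a,b}) = 2" using card_Diff_subset[of "{a,b}" F] assms cF finF by simp
  then obtain w z where wz: "F - {a,b} = {w,z}" "w \<noteq> z" by (meson card_2_iff)
  then have "F = {a,b,w,z}" using assms by blast
  then show ?thesis using that wz by blast
qed

lemma aut_fixF: assumes "aut P le \<tau>" "\<forall>f\<in>F. \<tau> f = f" "x \<in> P" shows "\<tau> x = x"
proof (cases "x \<in> E")
  case True
  have fx: "\<forall>y\<in>U x. \<tau> y = y" using assms(2) U_sub[of x] by blast
  have "\<tau> ` U x = U x"
  proof
    show "\<tau> ` U x \<subseteq> U x" using fx by auto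
    show "U x \<subseteq> \<tau> ` U x"
    proof
      fix y assume "y \<in> U x"
      then have "y = \<tau> y" using fx by simp
      then show "y \<in> \<tau> ` U x" using \<open>y \<in> U x\<close> by (metis imageI)
    qed
  qed
  then have "U (\<tau> x) = U x" using aut_U[OF assms(1) True] by simp
  then show ?thesis using iU aut_E[OF assms(1) True] True inj_on_eq_iff by metis
next
  case False
  then show ?thesis using assms PEF by blast
qed

lemma aut_fixE: assumes "aut P le \<tau>" "\<forall>e\<in>E. \<tau> e = e" "x \<in> P" shows "\<tau> x = x"
proof (rule ccontr)
  assume ne: "\<tau> x \<noteq> x"
  then have xF: "x \<in> F" using assms PEF by blast
  define g where "g = \<tau> x"
  have gF: "g \<in> F" unfolding g_def using aut_F[OF assms(1) xF] .
  obtain w z where wz: "F = {x,g,w,z}" "w \<in> F" "z \<in> F" "w \<noteq> x" "w \<noteq> g" "z \<noteq> x" "z \<noteq> g" "w \<noteq> z"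
    using third[OF xF gF] ne unfolding g_def by metis
  obtain e where e: "e \<in> E" "U e = {x, w}" using pair_e[OF xF wz(2)] wz(4) by metis
  have "U e = \<tau> ` U e" using aut_U[OF assms(1) e(1)] assms(2) e(1) by simp
  then have "g \<in> {x, w}" using e(2) unfolding g_def by auto
  then show False using wz ne unfolding g_def by auto
qed

lemma U_fix_iff: assumes "aut P le \<tau>" "e \<in> E" shows "\<tau> e = e \<longleftrightarrow> \<tau> ` U e = U e"
  using aut_U[OF assms] iU aut_E[OF assms] assms(2) inj_on_eq_iff by metis

lemma img2: "\<tau> ` {p, q} = {\<tau> p, \<tau> q}" by simp

lemma not_orbit:
  assumes aut: "aut P le \<tau>" and f: "f \<in> F" "\<tau> f \<noteq> f" and x: "x \<in> E"
  shows "\<exists>e\<in>E. \<tau> e \<noteq> e \<and> (\<forall>i. (\<tau> ^^ i) x \<noteq> e)"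
proof -
  have key: "\<exists>e\<in>E. \<tau> e \<noteq> e \<and> (\<forall>i. (\<tau> ^^ i) x \<noteq> e)"
    if Rinv: "\<And>e. e \<in> E \<Longrightarrow> R (\<tau> e) \<longleftrightarrow> R e"
    and e12: "e1 \<in> E" "\<tau> e1 \<noteq> e1" "R e1" "e2 \<in> E" "\<tau> e2 \<noteq> e2" "\<not> R e2" for R e1 e2
  proof (cases "R x")
    case True
    have "(\<tau> ^^ i) x \<noteq> e2" for i using inv_orbit[where R=R and \<tau>=\<tau>, OF aut Rinv x, of i] True e12 by auto
    then show ?thesis using e12 by blast
  next
    case False
    have "(\<tau> ^^ i) x \<noteq> e1" for i using inv_orbit[where R=R and \<tau>=\<tau>, OF aut Rinv x, of i] False e12 by auto
    then show ?thesis using e12 by blast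
  qed
  have tF: "\<tau> y \<in> F" if "y \<in> F" for y using aut_F[OF aut that] .
  have tinj: "\<tau> y = \<tau> y' \<longleftrightarrow> y = y'" if "y \<in> F" "y' \<in> F" for y y'
    using aut_inj[OF aut] that FP by blast
  have moved_pair: "\<tau> e \<noteq> e" if "e \<in> E" "U e = {p, q}" "{\<tau> p, \<tau> q} \<noteq> {p, q}" for e p q
    using U_fix_iff[OF aut that(1)] that(2,3) by simp
  define g where "g = \<tau> f"
  have gF: "g \<in> F" unfolding g_def using tF[OF f(1)] .
  have gf: "g \<noteq> f" unfolding g_def using f(2) .
  show ?thesis
  proof (cases "\<exists>z\<in>F. \<tau> z = z")
    case True
    then obtain z where z: "z \<in> F" "\<tau> z = z" by blast
    have zf: "z \<noteq> f" using z f by auto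
    have zg: "z \<noteq> g" using z f tinj[OF z(1) f(1)] unfolding g_def by auto
    define R where "R e = (z \<in> U e)" for e
    have Rinv: "R (\<tau> e) \<longleftrightarrow> R e" if e: "e \<in> E" for e
    proof -
      have "z \<in> \<tau> ` U e \<longleftrightarrow> z \<in> U e"
      proof
        assume "z \<in> \<tau> ` U e"
        then obtain y where y: "y \<in> U e" "\<tau> y = z" by blast
        have "y \<in> F" using y(1) U_sub[of e] by blast
        then have "y = z" using tinj[of y z] z y(2) by simp
        then show "z \<in> U e" using y by simp
      next
        assume "z \<in> U e"
        then show "z \<in> \<tau> ` U e" using z(2) by (metis imageI)
      qed
      then show ?thesis unfolding R_def using aut_U[OF aut e] by simp
    qed
    obtain e1 where e1: "e1 \<in> E" "U e1 = {f, z}" using pair_e[OF f(1) z(1) zf[symmetric]] by blast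
    have m1: "\<tau> e1 \<noteq> e1" using moved_pair[OF e1] z(2) gf zg unfolding g_def[symmetric]
      by (auto simp: doubleton_eq_iff)
    have R1: "R e1" unfolding R_def using e1 by simp
    show ?thesis
    proof (cases "\<tau> g = f")
      case False
      obtain e2 where e2: "e2 \<in> E" "U e2 = {f, g}" using pair_e[OF f(1) gF gf[symmetric]] by blast
      have "\<tau> g \<noteq> g" using tinj[OF gF f(1)] gf unfolding g_def by simp
      then have m2: "\<tau> e2 \<noteq> e2" using moved_pair[OF e2] False unfolding g_def[symmetric]
        by (auto simp: doubleton_eq_iff)
      have R2: "\<not> R e2" unfolding R_def using e2 zf zg by simp
      show ?thesis by (rule key[OF Rinv e1(1) m1 R1 e2(1) m2 R2])
    next
      case True
      obtain w where w: "w \<in> F" "F = {f,g,z,w}" "w \<noteq> f" "w \<noteq> g" "w \<noteq> z"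
        using fourth[OF f(1) gF z(1) gf[symmetric] zf[symmetric] zg[symmetric]] by blast
      have "\<tau> w \<in> F" using tF[OF w(1)] .
      moreover have "\<tau> w \<noteq> g" using tinj[OF w(1) f(1)] w unfolding g_def by simp
      moreover have "\<tau> w \<noteq> f" using tinj[OF w(1) gF] w True by simp
      moreover have "\<tau> w \<noteq> z" using tinj[OF w(1) z(1)] w z(2) by simp
      ultimately have tw: "\<tau> w = w" using w(2) by auto
      obtain e2 where e2: "e2 \<in> E" "U e2 = {f, w}" using pair_e[OF f(1) w(1) w(3)[symmetric]] by blast
      have m2: "\<tau> e2 \<noteq> e2" using moved_pair[OF e2] tw gf w unfolding g_def[symmetric]
        by (auto simp: doubleton_eq_iff)
      have R2: "\<not> R e2" unfolding R_def using e2 zf w by auto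
      show ?thesis by (rule key[OF Rinv e1(1) m1 R1 e2(1) m2 R2])
    qed
  next
    case False
    then have allm: "\<tau> y \<noteq> y" if "y \<in> F" for y using that by blast
    have fam: "\<exists>e\<in>E. \<tau> e \<noteq> e \<and> (\<forall>i. (\<tau> ^^ i) x \<noteq> e)"
      if A: "A1 \<subseteq> F" "A2 \<subseteq> F" "\<tau> ` A1 = A2" "\<tau> ` A2 = A1"
        and e12: "e1 \<in> E" "U e1 = A1" "\<tau> e1 \<noteq> e1" "e2 \<in> E" "\<tau> e2 \<noteq> e2" "U e2 \<noteq> A1" "U e2 \<noteq> A2"
      for A1 A2 e1 e2
    proof -
      define R where "R e = (U e = A1 \<or> U e = A2)" for e
      have injF: "inj_on \<tau> F" using tinj by (meson inj_onI)
      have Rinv: "R (\<tau> e) \<longleftrightarrow> R e" if e: "e \<in> E" for e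
      proof -
        have c1: "\<tau> ` U e = A1 \<longleftrightarrow> U e = A2"
          using inj_on_image_eq_iff[OF injF U_sub A(2)] A(4) by simp
        have c2: "\<tau> ` U e = A2 \<longleftrightarrow> U e = A1"
          using inj_on_image_eq_iff[OF injF U_sub A(1)] A(3) by simp
        have "R (\<tau> e) \<longleftrightarrow> (\<tau> ` U e = A1 \<or> \<tau> ` U e = A2)" unfolding R_def aut_U[OF aut e] by (rule HOL.refl)
        then show ?thesis unfolding R_def using c1 c2 by auto
      qed
      have "R e1" "\<not> R e2" unfolding R_def using e12 by auto
      then show ?thesis using key[where R=R, OF Rinv e12(1) e12(3) _ e12(4) e12(5)] by blast
    qed
    show ?thesis
    proof (cases "\<tau> g = f")
      case True
      obtain w z where wz: "F = {f,g,w,z}" "w \<in> F" "z \<in> F" "w \<noteq> f" "w \<noteq> g" "z \<noteq> f" "z \<noteq> g" "w \<noteq> z"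
        using third[OF f(1) gF gf[symmetric]] by blast
      have "\<tau> w \<in> F" using tF[OF wz(2)] .
      moreover have "\<tau> w \<noteq> g" using tinj[OF wz(2) f(1)] wz unfolding g_def by simp
      moreover have "\<tau> w \<noteq> f" using tinj[OF wz(2) gF] wz True by simp
      moreover have "\<tau> w \<noteq> w" using allm[OF wz(2)] .
      ultimately have tw: "\<tau> w = z" using wz(1) by auto
      have "\<tau> z \<in> F" using tF[OF wz(3)] .
      moreover have "\<tau> z \<noteq> g" using tinj[OF wz(3) f(1)] wz unfolding g_def by simp
      moreover have "\<tau> z \<noteq> f" using tinj[OF wz(3) gF] wz True by simp
      moreover have "\<tau> z \<noteq> z" using allm[OF wz(3)] .
      ultimately have tz: "\<tau> z = w" using wz(1) by auto
      obtain e1 where e1: "e1 \<in> E" "U e1 = {f, w}" using pair_e[OF f(1) wz(2)] wz by metis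
      obtain e2 where e2: "e2 \<in> E" "U e2 = {f, z}" using pair_e[OF f(1) wz(3)] wz by metis
      have m1: "\<tau> e1 \<noteq> e1" using moved_pair[OF e1] tw gf wz unfolding g_def[symmetric]
        by (auto simp: doubleton_eq_iff)
      have m2: "\<tau> e2 \<noteq> e2" using moved_pair[OF e2] tz gf wz unfolding g_def[symmetric]
        by (auto simp: doubleton_eq_iff)
      show ?thesis
      proof (rule fam[of "{f,w}" "{g,z}" e1 e2])
        show "{f, w} \<subseteq> F" "{g, z} \<subseteq> F" using f(1) gF wz by auto
        show "\<tau> ` {f, w} = {g, z}" using tw unfolding g_def by simp
        show "\<tau> ` {g, z} = {f, w}" using tz True by auto
      qed (use e1 e2 m1 m2 wz gf in \<open>auto simp: doubleton_eq_iff\<close>)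
    next
      case False
      define h where "h = \<tau> g"
      have hF: "h \<in> F" unfolding h_def using tF[OF gF] .
      have hg: "h \<noteq> g" unfolding h_def using allm[OF gF] .
      have hf: "h \<noteq> f" unfolding h_def using False .
      obtain z where z: "z \<in> F" "F = {f,g,h,z}" "z \<noteq> f" "z \<noteq> g" "z \<noteq> h"
        using fourth[OF f(1) gF hF gf[symmetric] hf[symmetric] hg[symmetric]] by blast
      have "\<tau> z \<noteq> g" using tinj[OF z(1) f(1)] z unfolding g_def by simp
      moreover have "\<tau> z \<noteq> h" using tinj[OF z(1) gF] z unfolding h_def by simp
      moreover have "\<tau> z \<noteq> z" using allm[OF z(1)] .
      moreover have "\<tau> z \<in> F" using tF[OF z(1)] .
      ultimately have tz0: "\<tau> z = f \<or> \<tau> z = h" using z(2) by auto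
      have "\<tau> h \<noteq> f"
      proof
        assume "\<tau> h = f"
        then have "\<tau> z \<noteq> f" using tinj[OF z(1) hF] z by simp
        then have "\<tau> z = h" using tz0 by simp
        then show False using \<open>\<tau> z \<noteq> h\<close> by simp
      qed
      moreover have "\<tau> h \<noteq> g" using tinj[OF hF f(1)] hf unfolding g_def by simp
      moreover have "\<tau> h \<noteq> h" using allm[OF hF] .
      moreover have "\<tau> h \<in> F" using tF[OF hF] .
      ultimately have th: "\<tau> h = z" using z(2) by auto
      have tz: "\<tau> z = f" using tz0 \<open>\<tau> z \<noteq> h\<close> by simp
      obtain e1 where e1: "e1 \<in> E" "U e1 = {f, h}" using pair_e[OF f(1) hF hf[symmetric]] by blast
      obtain e2 where e2: "e2 \<in> E" "U e2 = {f, g}" using pair_e[OF f(1) gF gf[symmetric]] by blast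
      have m1: "\<tau> e1 \<noteq> e1" using moved_pair[OF e1] th gf z unfolding g_def[symmetric]
        by (auto simp: doubleton_eq_iff)
      have m2: "\<tau> e2 \<noteq> e2" using moved_pair[OF e2] hf hg unfolding g_def[symmetric] h_def[symmetric]
        by (auto simp: doubleton_eq_iff)
      show ?thesis
      proof (rule fam[of "{f,h}" "{g,z}" e1 e2])
        show "{f, h} \<subseteq> F" "{g, z} \<subseteq> F" using f(1) gF hF z by auto
        show "\<tau> ` {f, h} = {g, z}" using th unfolding g_def by simp
        show "\<tau> ` {g, z} = {f, h}" using tz unfolding h_def by auto
      qed (use e1 e2 m1 m2 z gf hg hf in \<open>auto simp: doubleton_eq_iff\<close>)
    qed
  qed
qed

end


context std begin

lemma no_small_gen:
  assumes Q: "Q' \<subseteq> W" "Q' \<noteq> W" and g: "generator_fam P le Q' W_le r \<tau> T" and x: "x \<in> P"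
  shows "\<tau> x = x"
proof (rule ccontr)
  assume nx: "\<tau> x \<noteq> x"
  have aut: "aut P le \<tau>" and r2: "2 \<le> r" and fam: "gen_family P le r \<tau> T"
    and iso: "\<forall>i<r. poset_iso (T i) le Q' W_le" using g unfolding generator_fam_def by auto
  have a: "\<forall>i<r. T i \<subseteq> moved P \<tau> \<and> \<tau> ` T i = T ((i + 1) mod r)" and b: "(\<Union>i<r. T i) = moved P \<tau>"
    using fam unfolding gen_family_def by auto
  have Tpow: "T i = (\<tau> ^^ i) ` T 0" if "i < r" for i
    using that
  proof (induction i)
    case 0
    then show ?case by simp
  next
    case (Suc i)
    then have ir: "i < r" by simp
    have "(i + 1) mod r = Suc i" using Suc.prems by simp
    then have "T (Suc i) = \<tau> ` T i" using a ir by metis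
    also have "\<dots> = \<tau> ` (\<tau> ^^ i) ` T 0" using Suc.IH ir by simp
    finally show ?case by (simp add: image_comp)
  qed
  have r0: "0 < r" using r2 by simp
  obtain \<beta> where "bij_betw \<beta> (T 0) Q'" using iso r0 unfolding poset_iso_def by blast
  then have cT: "card (T 0) = card Q'" by (rule bij_betw_same_card)
  have QW: "Q' \<subset> W" using Q by blast
  have fW: "finite W" by (simp add: W_def)
  have "card Q' < card W" by (rule psubset_card_mono[OF fW QW])
  moreover have "card W = 3" by (simp add: W_def)
  ultimately have cT2: "card (T 0) \<le> 2" using cT by simp
  have "T 0 \<subseteq> moved P \<tau>" using a[rule_format, OF r0] by (rule conjunct1)
  then have T0P: "T 0 \<subseteq> P" using moved_sub by (rule subset_trans)
  have decomp: "\<exists>i z. z \<in> T 0 \<and> y = (\<tau> ^^ i) z" if "y \<in> moved P \<tau>" for y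
  proof -
    have "y \<in> (\<Union>i<r. T i)" using that b by simp
    then obtain i where "i < r" "y \<in> T i" by blast
    then have "y \<in> (\<tau> ^^ i) ` T 0" using Tpow[OF \<open>i < r\<close>] by simp
    then obtain z where "z \<in> T 0" "y = (\<tau> ^^ i) z" by blast
    then show ?thesis by blast
  qed
  have "\<not> (\<forall>e\<in>E. \<tau> e = e)" using aut_fixE[OF aut _ x] nx by metis
  then obtain e0 where e0: "e0 \<in> E" "\<tau> e0 \<noteq> e0" by blast
  have "\<not> (\<forall>f\<in>F. \<tau> f = f)" using aut_fixF[OF aut _ x] nx by metis
  then obtain f0 where f0: "f0 \<in> F" "\<tau> f0 \<noteq> f0" by blast
  obtain i z where z: "z \<in> T 0" "e0 = (\<tau> ^^ i) z"
    using decomp[of e0] e0 EP unfolding moved_def by blast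
  have zE: "z \<in> E" using funpow_PE[OF aut, of z i] z T0P e0(1) by auto
  obtain j z' where z': "z' \<in> T 0" "f0 = (\<tau> ^^ j) z'"
    using decomp[of f0] f0 FP unfolding moved_def by blast
  have z'P: "z' \<in> P" using z'(1) T0P by blast
  have "f0 \<notin> E" using f0(1) E_notF by blast
  then have "z' \<notin> E" using funpow_PE[OF aut z'P, of j] z'(2) by simp
  then have z'F: "z' \<in> F" using z'P PEF by blast
  have uniq: "y = z" if "y \<in> T 0" "y \<in> E" for y
  proof (rule ccontr)
    assume "y \<noteq> z"
    moreover have "z' \<noteq> y" "z' \<noteq> z" using z'F that(2) zE E_notF by auto
    ultimately have "card {y, z, z'} = 3" by simp
    moreover have "{y, z, z'} \<subseteq> T 0" using that z z' by simp
    moreover have "finite (T 0)" using T0P fin finite_subset by blast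
    ultimately have "3 \<le> card (T 0)" by (metis card_mono)
    then show False using cT2 by simp
  qed
  obtain e' where e': "e' \<in> E" "\<tau> e' \<noteq> e'" "\<forall>i. (\<tau> ^^ i) z \<noteq> e'"
    using not_orbit[OF aut f0 zE] by blast
  obtain k y where y: "y \<in> T 0" "e' = (\<tau> ^^ k) y"
    using decomp[of e'] e' EP unfolding moved_def by blast
  have "y \<in> E" using funpow_PE[OF aut, of y k] y T0P e'(1) by auto
  then have "y = z" using uniq y(1) by blast
  then show False using e'(3) y(2) by blast
qed

lemma not_composite: "\<not> composite P le W W_le 2 S"
proof
  assume "composite P le W W_le 2 S"
  then obtain Q' r' S' where h: "Q' \<subseteq> W" "2 \<le> r'" "S' \<noteq> {}" "is_sym_set P le Q' W_le r' S'"
      "Q' \<subset> W \<or> (Q' = W \<and> r' < 2)"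
    unfolding composite_def by blast
  then have QW: "Q' \<noteq> W" by auto
  obtain A' where S': "S' = sym_set P le Q' W_le r' A'" using h(4) unfolding is_sym_set_def by blast
  obtain x where "x \<in> S'" using h(3) by blast
  then obtain g where xg: "x \<in> P" "g \<in> sym_group P le Q' W_le r' A'" "g x \<noteq> x"
    unfolding S' sym_set_def by blast
  have "\<exists>\<sigma>\<in>adm_gens P le Q' W_le r' A'. \<sigma> x \<noteq> x"
    using gen_closure_moves[OF xg(2)[unfolded sym_group_def] xg(3)] .
  then obtain \<sigma> where \<sigma>: "\<sigma> \<in> adm_gens P le Q' W_le r' A'" "\<sigma> x \<noteq> x" by blast
  then have "is_generator P le Q' W_le r' \<sigma>" unfolding adm_gens_def by simp
  then obtain T where gT: "generator_fam P le Q' W_le r' \<sigma> T" unfolding is_generator_def by blast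
  have "\<sigma> x = x" by (rule no_small_gen[OF h(1) QW gT xg(1)])
  then show False using \<sigma>(2) by simp
qed

end


lemma tr_image_fix_iff: assumes "u \<noteq> v" shows "tr u v ` X = X \<longleftrightarrow> (u \<in> X \<longleftrightarrow> v \<in> X)"
proof
  assume h: "tr u v ` X = X"
  show "u \<in> X \<longleftrightarrow> v \<in> X"
  proof
    assume "u \<in> X" then have "tr u v u \<in> tr u v ` X" by (rule imageI)
    then show "v \<in> X" using h by simp
  next
    assume "v \<in> X" then have "tr u v v \<in> tr u v ` X" by (rule imageI)
    then show "u \<in> X" using h by simp
  qed
next
  assume h: "u \<in> X \<longleftrightarrow> v \<in> X"
  have *: "tr u v x \<in> X" if "x \<in> X" for x
  proof (cases "x = u \<or> x = v")
    case True
    then have "u \<in> X" "v \<in> X" using that h by blast+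
    then show ?thesis using True by (metis tr_u tr_v)
  next
    case False
    then show ?thesis using that by simp
  qed
  show "tr u v ` X = X"
  proof
    show "tr u v ` X \<subseteq> X" using * by blast
    show "X \<subseteq> tr u v ` X"
    proof
      fix x assume "x \<in> X"
      then have "tr u v x \<in> X" by (rule *)
      moreover have "x = tr u v (tr u v x)" by simp
      ultimately show "x \<in> tr u v ` X" by blast
    qed
  qed
qed

context bip begin

lemma isoW3:
  assumes "p \<in> E" "q \<in> E" "p \<noteq> q" "t \<in> F" "le p t" "le q t"
  shows "poset_iso {p, q, t} le W W_le"
proof -
  have tp: "t \<noteq> p" "t \<noteq> q" using assms E_notF by auto
  define \<beta> where "\<beta> x = (if x = p then 0 else if x = q then 1 else 2::nat)" for x
  have "inj_on \<beta> {p, q, t}" unfolding inj_on_def \<beta>_def using assms(3) tp by auto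
  moreover have "\<beta> ` {p, q, t} = W" unfolding \<beta>_def W_def using assms(3) tp by auto
  ultimately have "bij_betw \<beta> {p, q, t} W" unfolding bij_betw_def by simp
  moreover have "\<forall>x\<in>{p, q, t}. \<forall>y\<in>{p, q, t}. le x y \<longleftrightarrow> W_le (\<beta> x) (\<beta> y)"
  proof (intro ballI)
    fix x y assume xy: "x \<in> {p, q, t}" "y \<in> {p, q, t}"
    have r: "le p p" "le q q" "le t t" using refl assms EP FP by auto
    have n: "\<not> le p q" "\<not> le q p" using le_EE assms by blast+
    have n2: "\<not> le t p" "\<not> le t q" using le_FE assms by blast+
    show "le x y \<longleftrightarrow> W_le (\<beta> x) (\<beta> y)"
      using xy r n n2 assms(5,6) assms(3) tp unfolding \<beta>_def W_le_def by auto
  qed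
  ultimately show ?thesis unfolding poset_iso_def by blast
qed

lemma n_ord3:
  assumes "p \<in> E" "q \<in> E" "p \<noteq> q" "t \<in> F" "le p t" "le q t"
  shows "n_ord le {p, q, t} = 2"
proof -
  have tp: "t \<noteq> p" "t \<noteq> q" using assms E_notF by auto
  have "{(a, b). a \<in> {p, q, t} \<and> b \<in> {p, q, t} \<and> less_in le a b} = {(p, t), (q, t)}"
  proof
    show "{(a, b). a \<in> {p, q, t} \<and> b \<in> {p, q, t} \<and> less_in le a b} \<subseteq> {(p, t), (q, t)}"
    proof
      fix z assume "z \<in> {(a, b). a \<in> {p, q, t} \<and> b \<in> {p, q, t} \<and> less_in le a b}"
      then obtain a b where ab: "z = (a, b)" "a \<in> {p, q, t}" "b \<in> {p, q, t}" "less_in le a b" by blast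
      have "a \<in> P" "b \<in> P" using ab assms EP FP by auto
      then have "a \<in> E" "b \<in> F" using less_iff ab(4) by auto
      then have "a \<noteq> t" "b = t" using ab assms E_notF by auto
      then show "z \<in> {(p, t), (q, t)}" using ab by auto
    qed
    show "{(p, t), (q, t)} \<subseteq> {(a, b). a \<in> {p, q, t} \<and> b \<in> {p, q, t} \<and> less_in le a b}"
      using assms tp unfolding less_in_def by auto
  qed
  moreover have "card {(p, t), (q, t)} = 2" using assms(3) by simp
  ultimately show ?thesis unfolding n_ord_def by simp
qed

end

context std begin

definition sg :: "'a \<Rightarrow> 'a \<Rightarrow> 'a \<Rightarrow> 'a" where
  "sg u v x = (if x \<in> F then tr u v x else if x \<in> E then inv_into E U (tr u v ` U x) else x)"

lemma sg_sym: "sg u v = sg v u"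
  by (rule ext) (simp add: sg_def tr_sym[of u v])

lemma trF: assumes "u \<in> F" "v \<in> F" "x \<in> F" shows "tr u v x \<in> F"
  using assms by (auto simp: tr_def)

lemma trU_ex: assumes "u \<in> F" "v \<in> F" "e \<in> E" shows "\<exists>e'\<in>E. U e' = tr u v ` U e"
proof -
  have "tr u v ` U e \<subseteq> F" using trF assms U_sub by blast
  moreover have "card (tr u v ` U e) = 2" using cU[OF assms(3)] by simp
  ultimately show ?thesis using sU by blast
qed

lemma sgE: assumes "u \<in> F" "v \<in> F" "e \<in> E"
  shows "sg u v e \<in> E" "U (sg u v e) = tr u v ` U e"
proof -
  have eq: "sg u v e = inv_into E U (tr u v ` U e)" unfolding sg_def using assms(3) E_notF by simp
  have "tr u v ` U e \<in> U ` E" using trU_ex[OF assms] by blast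
  then show "sg u v e \<in> E" "U (sg u v e) = tr u v ` U e" unfolding eq
    by (simp_all add: inv_into_into f_inv_into_f)
qed

lemma sgF: "x \<in> F \<Longrightarrow> sg u v x = tr u v x" unfolding sg_def by simp

lemma sg_sg: assumes "u \<in> F" "v \<in> F" "x \<in> P" shows "sg u v (sg u v x) = x"
proof (cases "x \<in> E")
  case True
  have "U (sg u v (sg u v x)) = U x" using sgE[OF assms(1,2) sgE(1)[OF assms(1,2) True]] sgE[OF assms(1,2) True]
    by simp
  then show ?thesis using iU sgE(1)[OF assms(1,2) sgE(1)[OF assms(1,2) True]] True inj_on_eq_iff by metis
next
  case False
  then have "x \<in> F" using assms PEF by blast
  then show ?thesis using sgF trF[OF assms(1,2)] by simp
qed

lemma sgP: assumes "u \<in> F" "v \<in> F" "x \<in> P" shows "sg u v x \<in> P"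
proof (cases "x \<in> E")
  case True
  then show ?thesis using sgE[OF assms(1,2)] EP by blast
next
  case False
  then have "x \<in> F" using assms PEF by blast
  then show ?thesis using sgF trF[OF assms(1,2)] FP by simp
qed

lemma sg_E_iff: assumes "u \<in> F" "v \<in> F" "x \<in> P" shows "sg u v x \<in> E \<longleftrightarrow> x \<in> E"
proof (cases "x \<in> E")
  case True
  then show ?thesis using sgE[OF assms(1,2)] by blast
next
  case False
  then have "x \<in> F" using assms PEF by blast
  then have "tr u v x \<in> F" using trF[OF assms(1,2)] by blast
  then show ?thesis using sgF[OF \<open>x \<in> F\<close>] E_notF False by auto
qed

lemma sg_aut: assumes u: "u \<in> F" and v: "v \<in> F" shows "aut P le (sg u v)"
  unfolding aut_def
proof (intro conjI ballI allI impI)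
  have "inj_on (sg u v) P" by (metis inj_onI sg_sg u v)
  moreover have "sg u v ` P = P"
  proof
    show "sg u v ` P \<subseteq> P" using sgP[OF u v] by blast
    show "P \<subseteq> sg u v ` P"
    proof
      fix x assume "x \<in> P"
      then have "x = sg u v (sg u v x)" "sg u v x \<in> P" using sg_sg[OF u v] sgP[OF u v] by auto
      then show "x \<in> sg u v ` P" by blast
    qed
  qed
  ultimately show "bij_betw (sg u v) P P" unfolding bij_betw_def by simp
next
  fix x y assume xy: "x \<in> P" "y \<in> P"
  have eq: "sg u v x = sg u v y \<longleftrightarrow> x = y" using sg_sg[OF u v] xy by metis
  have Uy: "sg u v y \<in> U (sg u v x) \<longleftrightarrow> y \<in> U x" if xE: "x \<in> E"
  proof (cases "y \<in> E")
    case True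
    then have "sg u v y \<in> E" using sgE[OF u v] by blast
    then show ?thesis using True U_sub E_notF by blast
  next
    case False
    then have yF: "y \<in> F" using xy PEF by blast
    have "sg u v y \<in> U (sg u v x) \<longleftrightarrow> tr u v y \<in> tr u v ` U x"
      using sgE(2)[OF u v xE] sgF[OF yF] by simp
    also have "\<dots> \<longleftrightarrow> y \<in> U x" using inj_tr by (metis inj_on_image_mem_iff subset_UNIV UNIV_I)
    finally show ?thesis .
  qed
  have "le (sg u v x) (sg u v y) \<longleftrightarrow> sg u v x = sg u v y \<or> (sg u v x \<in> E \<and> sg u v y \<in> U (sg u v x))"
    using le_char sgP[OF u v] xy by blast
  also have "\<dots> \<longleftrightarrow> x = y \<or> (x \<in> E \<and> y \<in> U x)"
    using eq sg_E_iff[OF u v xy(1)] Uy by blast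
  also have "\<dots> \<longleftrightarrow> le x y" using le_char xy by blast
  finally show "le x y \<longleftrightarrow> le (sg u v x) (sg u v y)" by simp
next
  fix x assume "x \<notin> P"
  then show "sg u v x = x" unfolding sg_def using PEF by auto
qed

definition Nset :: "'a \<Rightarrow> 'a \<Rightarrow> 'a set" where
  "Nset u v = {e \<in> E. u \<in> U e \<and> v \<notin> U e}"

lemma sg_moved: assumes u: "u \<in> F" and v: "v \<in> F" and uv: "u \<noteq> v"
  shows "moved P (sg u v) = insert u (Nset u v) \<union> insert v (Nset v u)"
proof
  show "moved P (sg u v) \<subseteq> insert u (Nset u v) \<union> insert v (Nset v u)"
  proof
    fix x assume x: "x \<in> moved P (sg u v)"
    then have xP: "x \<in> P" and nx: "sg u v x \<noteq> x" unfolding moved_def by auto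
    show "x \<in> insert u (Nset u v) \<union> insert v (Nset v u)"
    proof (cases "x \<in> E")
      case True
      have "U (sg u v x) \<noteq> U x" using nx iU sgE[OF u v True] True inj_on_eq_iff by metis
      then have "tr u v ` U x \<noteq> U x" using sgE(2)[OF u v True] by simp
      then have "\<not> (u \<in> U x \<longleftrightarrow> v \<in> U x)" using tr_image_fix_iff[OF uv] by blast
      then show ?thesis using True unfolding Nset_def by blast
    next
      case False
      then have "x \<in> F" using xP PEF by blast
      then have "tr u v x \<noteq> x" using nx sgF by simp
      then have "x = u \<or> x = v" by (metis tr_o)
      then show ?thesis by blast
    qed
  qed
  show "insert u (Nset u v) \<union> insert v (Nset v u) \<subseteq> moved P (sg u v)"
  proof
    fix x assume x: "x \<in> insert u (Nset u v) \<union> insert v (Nset v u)"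
    show "x \<in> moved P (sg u v)"
    proof (cases "x = u \<or> x = v")
      case True
      then have "x \<in> F" "sg u v x \<noteq> x" using u v uv sgF by auto
      then show ?thesis unfolding moved_def using FP by blast
    next
      case False
      then have xE: "x \<in> E" "\<not> (u \<in> U x \<longleftrightarrow> v \<in> U x)" using x unfolding Nset_def by auto
      then have "tr u v ` U x \<noteq> U x" using tr_image_fix_iff[OF uv] by blast
      then have "sg u v x \<noteq> x" using sgE(2)[OF u v xE(1)] by metis
      then show ?thesis unfolding moved_def using xE EP by blast
    qed
  qed
qed

lemma Nset_img: assumes u: "u \<in> F" and v: "v \<in> F" and uv: "u \<noteq> v"
  shows "sg u v ` insert u (Nset u v) = insert v (Nset v u)"
proof -
  have into: "sg u v e \<in> Nset v u" if e: "e \<in> Nset u v" for e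
  proof -
    have eE: "e \<in> E" and h: "u \<in> U e" "v \<notin> U e" using e unfolding Nset_def by auto
    have "U (sg u v e) = tr u v ` U e" using sgE(2)[OF u v eE] .
    moreover have "v \<in> tr u v ` U e" using h(1) by (metis imageI tr_u)
    moreover have "u \<notin> tr u v ` U e"
    proof
      assume "u \<in> tr u v ` U e"
      then obtain y where "y \<in> U e" "tr u v y = u" by (metis imageE)
      then have "y = v" by (metis tr_tr tr_v)
      then show False using h(2) \<open>y \<in> U e\<close> by simp
    qed
    ultimately show ?thesis using sgE(1)[OF u v eE] unfolding Nset_def by simp
  qed
  have into': "sg u v e \<in> Nset u v" if e: "e \<in> Nset v u" for e
    using Nset_def sg_sym that
  proof -
    have eE: "e \<in> E" and h: "v \<in> U e" "u \<notin> U e" using e unfolding Nset_def by auto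
    have "U (sg u v e) = tr u v ` U e" using sgE(2)[OF u v eE] .
    moreover have "u \<in> tr u v ` U e" using h(1) by (metis imageI tr_v)
    moreover have "v \<notin> tr u v ` U e"
    proof
      assume "v \<in> tr u v ` U e"
      then obtain y where "y \<in> U e" "tr u v y = v" by (metis imageE)
      then have "y = u" by (metis tr_tr tr_u)
      then show False using h(2) \<open>y \<in> U e\<close> by simp
    qed
    ultimately show ?thesis using sgE(1)[OF u v eE] unfolding Nset_def by simp
  qed
  show ?thesis
  proof
    show "sg u v ` insert u (Nset u v) \<subseteq> insert v (Nset v u)"
      using into sgF[OF u] by auto
    show "insert v (Nset v u) \<subseteq> sg u v ` insert u (Nset u v)"
    proof
      fix x assume "x \<in> insert v (Nset v u)"
      then show "x \<in> sg u v ` insert u (Nset u v)"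
      proof
        assume "x = v"
        then show ?thesis using sgF[OF u] by (metis imageI insertI1 tr_u)
      next
        assume xN: "x \<in> Nset v u"
        then have "x \<in> P" unfolding Nset_def using EP by blast
        then have "x = sg u v (sg u v x)" using sg_sg[OF u v] by simp
        moreover have "sg u v x \<in> Nset u v" using into'[OF xN] .
        ultimately show ?thesis by blast
      qed
    qed
  qed
qed

lemma Nset_two: assumes u: "u \<in> F" and v: "v \<in> F" and uv: "u \<noteq> v"
  obtains p q where "Nset u v = {p, q}" "p \<in> E" "q \<in> E" "p \<noteq> q" "le p u" "le q u"
proof -
  obtain w z where wz: "F = {u,v,w,z}" "w \<in> F" "z \<in> F" "w \<noteq> u" "w \<noteq> v" "z \<noteq> u" "z \<noteq> v" "w \<noteq> z"
    using third[OF u v uv] by blast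
  obtain p where p: "p \<in> E" "U p = {u, w}" using pair_e[OF u wz(2)] wz(4) by metis
  obtain q where q: "q \<in> E" "U q = {u, z}" using pair_e[OF u wz(3)] wz(6) by metis
  have "p \<noteq> q"
  proof
    assume "p = q"
    then have "{u, w} = {u, z}" using p q by simp
    then have "w \<in> {u, z}" by blast
    then show False using wz(4,8) by blast
  qed
  have N: "Nset u v = {p, q}"
  proof
    show "{p, q} \<subseteq> Nset u v" using p q wz(5,7) uv unfolding Nset_def by auto
    show "Nset u v \<subseteq> {p, q}"
    proof
      fix e assume "e \<in> Nset u v"
      then have e: "e \<in> E" "u \<in> U e" "v \<notin> U e" unfolding Nset_def by auto
      have "card (U e - {u}) = 1" using cU[OF e(1)] e(2) finU by simp
      then obtain t where t: "U e - {u} = {t}" using card_1_singletonE by blast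
      then have Ue: "U e = {u, t}" using e(2) by blast
      have "t \<in> U e" "t \<noteq> u" using t by auto
      then have "t \<in> F" "t \<noteq> u" "t \<noteq> v" using U_sub[of e] e(3) by auto
      then have "t = w \<or> t = z" using wz(1) by blast
      then have "U e = U p \<or> U e = U q" using Ue p q by auto
      then have "e = p \<or> e = q" using inj_on_eq_iff[OF iU e(1) p(1)] inj_on_eq_iff[OF iU e(1) q(1)] by blast
      then show "e \<in> {p, q}" by blast
    qed
  qed
  have "u \<in> U p" "u \<in> U q" using p(2) q(2) by simp_all
  then have "le p u" "le q u" unfolding U_def by simp_all
  then show ?thesis using that N p(1) q(1) \<open>p \<noteq> q\<close> by blast
qed

lemma gen_uv:
  assumes u: "u \<in> F" and v: "v \<in> F" and uv: "u \<noteq> v"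
  defines "S \<equiv> (\<lambda>i::nat. if i = 0 then insert u (Nset u v) else insert v (Nset v u))"
  shows "generator_fam P le W W_le 2 (sg u v) S"
proof -
  have aut: "aut P le (sg u v)" by (rule sg_aut[OF u v])
  have mv: "moved P (sg u v) = S 0 \<union> S 1" unfolding S_def using sg_moved[OF u v uv] by simp
  have img0: "sg u v ` S 0 = S 1" unfolding S_def using Nset_img[OF u v uv] by simp
  have img1: "sg u v ` S 1 = S 0"
    using Nset_img[OF v u uv[symmetric]] unfolding sg_sym[of v u] S_def by simp
  obtain p q where pq: "Nset u v = {p, q}" "p \<in> E" "q \<in> E" "p \<noteq> q" "le p u" "le q u"
    by (rule Nset_two[OF u v uv])
  obtain p' q' where pq': "Nset v u = {p', q'}" "p' \<in> E" "q' \<in> E" "p' \<noteq> q'" "le p' v" "le q' v"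
    by (rule Nset_two[OF v u uv[symmetric]])
  have S0: "S 0 = {p, q, u}" unfolding S_def pq(1) by auto
  have S1: "S 1 = {p', q', v}" unfolding S_def pq'(1) by auto
  have uE: "u \<notin> E" "v \<notin> E" using u v E_notF by auto
  have "p \<noteq> u" "q \<noteq> u" "p' \<noteq> v" "q' \<noteq> v" using pq pq' uE by blast+
  then have c0: "card (S 0) = 3" and c1: "card (S 1) = 3" unfolding S0 S1 using pq(4) pq'(4) by simp_all
  have disj: "S 0 \<inter> S 1 = {}"
  proof -
    have "Nset u v \<inter> Nset v u = {}" unfolding Nset_def by auto
    then show ?thesis unfolding S_def using uv uE unfolding Nset_def by auto
  qed
  have fin01: "finite (S 0)" "finite (S 1)" unfolding S0 S1 by simp_all
  have cm: "card (moved P (sg u v)) = 6" unfolding mv using card_Un_disjoint[OF fin01 disj] c0 c1 by simp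
  have mvP: "moved P (sg u v) \<subseteq> P" by (rule moved_sub)
  have h0: "height le (S 0) = 2"
    by (rule height_2[of "S 0" p u]) (use S0 pq u uE EP FP in auto)
  have h1: "height le (S 1) = 2"
    by (rule height_2[of "S 1" p' v]) (use S1 pq' v uE EP FP in auto)
  have hm: "height le (moved P (sg u v)) = 2"
    by (rule height_2[of _ p u]) (use mv S0 pq u uE EP FP mvP in auto)
  have no0: "n_ord le (S 0) = 2" unfolding S0 by (rule n_ord3) (use pq u in auto)
  have no1: "n_ord le (S 1) = 2" unfolding S1 by (rule n_ord3) (use pq' v in auto)
  have mo: "max_ordered le (moved P (sg u v)) (S i)" if "i < 2" for i
    unfolding max_ordered_def
  proof (intro conjI allI impI)
    show "S i \<subseteq> moved P (sg u v)" using that mv by (auto simp: two_cases)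
    fix B assume B: "B \<subseteq> moved P (sg u v) \<and> card B = card (S i)"
    then have "card B = 3" using c0 c1 that by (auto simp: two_cases)
    then have "n_ord le B \<le> 2" using n_ord_le2 B mvP by blast
    then show "n_ord le B \<le> n_ord le (S i)" using no0 no1 that by (auto simp: two_cases)
  qed
  have fam: "gen_family P le 2 (sg u v) S"
    unfolding gen_family_def
  proof (intro conjI allI impI)
    fix i :: nat assume i: "i < 2"
    show "S i \<subseteq> moved P (sg u v)" using i mv by (auto simp: two_cases)
    show "max_ordered le (moved P (sg u v)) (S i)" by (rule mo[OF i])
    show "sg u v ` S i = S ((i + 1) mod 2)" using i img0 img1 by (auto simp: two_cases)
    show "height le (S i) = height le (moved P (sg u v))" using i h0 h1 hm by (auto simp: two_cases)
  next
    show "(\<Union>i<2. S i) = moved P (sg u v)" unfolding Union2 mv ..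
  qed
  have iso: "poset_iso (S i) le W W_le" if "i < 2" for i
  proof -
    have "poset_iso (S 0) le W W_le" unfolding S0 by (rule isoW3) (use pq u in auto)
    moreover have "poset_iso (S 1) le W W_le" unfolding S1 by (rule isoW3) (use pq' v in auto)
    ultimately show ?thesis using that by (auto simp: two_cases)
  qed
  have minimal: "card (S i) \<le> card (T i)" if T: "gen_family P le 2 (sg u v) T" and i: "i < 2" for T i
  proof -
    from T have a: "\<forall>i<2. T i \<subseteq> moved P (sg u v) \<and> sg u v ` T i = T ((i + 1) mod 2)"
      and b: "(\<Union>i<2. T i) = moved P (sg u v)" unfolding gen_family_def by auto
    have t01: "sg u v ` T 0 = T 1" "sg u v ` T 1 = T 0" using a by auto
    have u01: "T 0 \<union> T 1 = moved P (sg u v)" using b Union2 by metis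
    have fm: "finite (moved P (sg u v))" using mvP fin finite_subset by blast
    have f01: "finite (T 0)" "finite (T 1)" using u01 fm by (metis finite_Un)+
    have "card (T 1) \<le> card (T 0)" using t01(1) card_image_le[OF f01(1)] by metis
    moreover have "card (T 0) \<le> card (T 1)" using t01(2) card_image_le[OF f01(2)] by metis
    moreover have "6 \<le> card (T 0) + card (T 1)" using cm u01 card_Un_le[of "T 0" "T 1"] by simp
    ultimately have "3 \<le> card (T 0)" "3 \<le> card (T 1)" by linarith+
    then show ?thesis using c0 c1 i by (auto simp: two_cases)
  qed
  show ?thesis unfolding generator_fam_def
    using aut fam iso minimal by auto
qed

end


context std begin

lemma linked_any: assumes "A \<subseteq> P" shows "linked P le A"
  unfolding linked_def
proof (intro ballI impI)
  fix a b assume ab: "a \<in> A" "b \<in> A" "less_in le a b"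
  have abP: "a \<in> P" "b \<in> P" using ab assms by auto
  have "\<not> (\<exists>c\<in>P. less_in le a c \<and> less_in le c b)"
  proof
    assume "\<exists>c\<in>P. less_in le a c \<and> less_in le c b"
    then obtain c where c: "c \<in> P" "less_in le a c" "less_in le c b" by blast
    then have "c \<in> F" "c \<in> E" using less_iff abP by blast+
    then show False using E_notF by blast
  qed
  then show "covers P le a b \<or> (\<exists>c\<in>A. less_in le a c \<and> less_in le c b)"
    unfolding covers_def using ab(3) by blast
qed

lemma psym_uv:
  assumes u: "u \<in> F" and v: "v \<in> F" and uv: "u \<noteq> v" and x: "x \<in> insert u (Nset u v)"
  shows "psym1 P le W W_le 2 x (sg u v x)"
proof -
  define S where "S = (\<lambda>i::nat. if i = 0 then insert u (Nset u v) else insert v (Nset v u))"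
  have g: "generator_fam P le W W_le 2 (sg u v) S" unfolding S_def by (rule gen_uv[OF u v uv])
  note G = gen_famD[OF g]
  have "u \<notin> Nset v u" unfolding Nset_def using u E_notF by blast
  then have "u \<notin> S 1" using uv unfolding S_def by simp
  then have S01: "S 0 \<noteq> S 1" unfolding S_def by auto
  have step: "sym_step P le W W_le 2 (sg u v) a (sg u v a)" if a: "a \<in> S 0" for a
  proof -
    have "sg u v a \<in> S 1" using G(4) a by blast
    then show ?thesis unfolding sym_step_def
      using g S01 a by (intro exI[of _ S] exI[of _ 0] exI[of _ 1] exI[of _ "1::nat"]) simp
  qed
  have A: "S 0 \<subseteq> P" using G(2) moved_sub by (rule subset_trans)
  have adm: "sg u v \<in> adm_gens P le W W_le 2 (S 0)"
    unfolding adm_gens_def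
  proof (intro CollectI conjI ballI impI)
    show "is_generator P le W W_le 2 (sg u v)" unfolding is_generator_def using g by blast
    fix b assume b: "b \<in> P" "\<not> (\<exists>a\<in>S 0. symrel P le W W_le 2 a b)"
    show "sg u v b = b"
    proof (rule ccontr)
      assume "sg u v b \<noteq> b"
      then have "b \<in> moved P (sg u v)" using b(1) unfolding moved_def by blast
      then have "b \<in> S 0 \<or> b \<in> S 1" using G(6) by blast
      then show False
      proof
        assume "b \<in> S 0"
        moreover have "symrel P le W W_le 2 b b" unfolding symrel_def by simp
        ultimately show False using b(2) by blast
      next
        assume "b \<in> S 1"
        then obtain a where a: "a \<in> S 0" "b = sg u v a" using G(4) by blast
        then have "sym1 P le W W_le 2 a b" unfolding sym1_def using step by blast
        then have "symrel P le W W_le 2 a b" unfolding symrel_def by (intro r_into_rtranclp) simp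
        then show False using b(2) a(1) by blast
      qed
    qed
  qed
  have "x \<in> S 0" using x unfolding S_def by simp
  then show ?thesis unfolding psym1_def
    using A linked_any[OF A] G(7) not_composite adm step by blast
qed

lemma F_conn: assumes "u \<in> F" "v \<in> F" shows "psymrel P le W W_le 2 u v"
proof (cases "u = v")
  case True
  then show ?thesis unfolding psymrel_def by simp
next
  case False
  have "psym1 P le W W_le 2 u (sg u v u)" by (rule psym_uv[OF assms False]) simp
  moreover have "sg u v u = v" using sgF[OF assms(1)] by simp
  ultimately show ?thesis using psym1_psymrel by metis
qed

lemma E_conn1:
  assumes e: "e \<in> E" "e' \<in> E" and w: "w \<in> U e" "w \<in> U e'"
  shows "psymrel P le W W_le 2 e e'"
proof (cases "e = e'")
  case True
  then show ?thesis unfolding psymrel_def by simp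
next
  case False
  have "card (U e - {w}) = 1" using cU[OF e(1)] w(1) finU by simp
  then obtain a where a: "U e - {w} = {a}" using card_1_singletonE by blast
  have "card (U e' - {w}) = 1" using cU[OF e(2)] w(2) finU by simp
  then obtain b where b: "U e' - {w} = {b}" using card_1_singletonE by blast
  have Ue: "U e = {w, a}" using a w(1) by blast
  have Ue': "U e' = {w, b}" using b w(2) by blast
  have aw: "a \<noteq> w" "b \<noteq> w" using a b by auto
  have aF: "a \<in> F" "b \<in> F" "w \<in> F" using Ue Ue' U_sub[of e] U_sub[of e'] by auto
  have ab: "a \<noteq> b"
  proof
    assume "a = b"
    then have "U e = U e'" using Ue Ue' by simp
    then show False using False inj_on_eq_iff[OF iU e] by simp
  qed
  have eN: "e \<in> insert a (Nset a b)" unfolding Nset_def using e(1) Ue ab aw by auto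
  have p: "psym1 P le W W_le 2 e (sg a b e)" by (rule psym_uv[OF aF(1,2) ab eN])
  have "U (sg a b e) = tr a b ` U e" by (rule sgE(2)[OF aF(1,2) e(1)])
  also have "\<dots> = {w, b}" using Ue aw ab by (simp add: tr_def)
  finally have "U (sg a b e) = U e'" using Ue' by simp
  then have "sg a b e = e'" using inj_on_eq_iff[OF iU sgE(1)[OF aF(1,2) e(1)] e(2)] by simp
  then show ?thesis using p psym1_psymrel by metis
qed

lemma E_conn: assumes e: "e \<in> E" "e' \<in> E" shows "psymrel P le W W_le 2 e e'"
proof -
  have "U e \<noteq> {}" "U e' \<noteq> {}" using cU e by (metis card.empty zero_neq_numeral)+
  then obtain p w' where p: "p \<in> U e" and w': "w' \<in> U e'" by blast
  show ?thesis
  proof (cases "w' \<in> U e")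
    case True
    show ?thesis by (rule E_conn1[OF e True w'])
  next
    case False
    then have pw: "p \<noteq> w'" using p by blast
    have "p \<in> F" "w' \<in> F" using p w' U_sub by blast+
    then obtain e'' where e'': "e'' \<in> E" "U e'' = {p, w'}" using pair_e pw by blast
    have "psymrel P le W W_le 2 e e''" using E_conn1[OF e(1) e''(1) p] e''(2) by simp
    moreover have "psymrel P le W W_le 2 e'' e'" using E_conn1[OF e''(1) e(2) _ w'] e''(2) by simp
    ultimately show ?thesis by (rule psymrel_trans)
  qed
qed

lemma cls_eq:
  assumes x: "x \<in> P"
  shows "{b \<in> P. psymrel P le W W_le 2 x b} = (if x \<in> E then E else F)"
proof -
  have inv: "b \<in> P \<and> (b \<in> E) = (x \<in> E)" if "psymrel P le W W_le 2 x b" for b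
  proof (rule psymrel_inv[of P le W W_le x b "\<lambda>z. z \<in> E"])
    show "psymrel P le W W_le 2 x b" by (rule that)
    show "x \<in> P" by (rule x)
    fix \<sigma> z assume "aut P le \<sigma>" "z \<in> P"
    then show "(\<sigma> z \<in> E) = (z \<in> E)" by (rule aut_E_iff)
  qed
  show ?thesis
  proof (cases "x \<in> E")
    case True
    have "{b \<in> P. psymrel P le W W_le 2 x b} = E"
    proof
      show "{b \<in> P. psymrel P le W W_le 2 x b} \<subseteq> E" using inv True by blast
      show "E \<subseteq> {b \<in> P. psymrel P le W W_le 2 x b}" using E_conn[OF True] EP by blast
    qed
    then show ?thesis using True by simp
  next
    case False
    then have xF: "x \<in> F" using x PEF by blast
    have "{b \<in> P. psymrel P le W W_le 2 x b} = F"
    proof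
      show "{b \<in> P. psymrel P le W W_le 2 x b} \<subseteq> F" using inv False PEF by blast
      show "F \<subseteq> {b \<in> P. psymrel P le W W_le 2 x b}" using F_conn[OF xF] FP by blast
    qed
    then show ?thesis using False by simp
  qed
qed

lemma backward: "poset_iso (pretract_carrier P le W W_le 2) (quot_le le) C2 C2_le
           \<and> \<not> poset_iso P le C2 C2_le"
proof
  have Fne: "F \<noteq> {}" using cF by auto
  obtain f0 f1 where f01: "f0 \<in> F" "f1 \<in> F" "f0 \<noteq> f1"
  proof -
    have "card F \<ge> 2" using cF by simp
    then obtain X where "X \<subseteq> F" "card X = 2" by (meson obtain_subset_with_card_n)
    then show ?thesis using that by (metis card_2_iff subset_iff insertCI)
  qed
  obtain e0 where e0: "e0 \<in> E" "U e0 = {f0, f1}" using pair_e f01 by blast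
  have carr: "pretract_carrier P le W W_le 2 = {E, F}"
  proof
    show "pretract_carrier P le W W_le 2 \<subseteq> {E, F}"
    proof
      fix X assume "X \<in> pretract_carrier P le W W_le 2"
      then obtain a where a: "a \<in> P" "X = {b \<in> P. psymrel P le W W_le 2 a b}"
        unfolding pretract_carrier_def by blast
      then have "X = (if a \<in> E then E else F)" using cls_eq by simp
      then show "X \<in> {E, F}" by simp
    qed
    have "E \<in> pretract_carrier P le W W_le 2"
      unfolding pretract_carrier_def using cls_eq[of e0] e0 EP by force
    moreover have "F \<in> pretract_carrier P le W W_le 2"
      unfolding pretract_carrier_def using cls_eq[of f0] f01 FP E_notF by force
    ultimately show "{E, F} \<subseteq> pretract_carrier P le W W_le 2" by blast
  qed
  have EneF: "E \<noteq> F" using e0(1) E_notF by blast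
  define h where "h X = (if X = E then 0 else 1::nat)" for X
  have "bij_betw h {E, F} C2"
    unfolding bij_betw_def inj_on_def h_def C2_def using EneF by auto
  moreover have "\<forall>X\<in>{E, F}. \<forall>Y\<in>{E, F}. quot_le le X Y \<longleftrightarrow> C2_le (h X) (h Y)"
  proof -
    have "le e0 f0" using e0(2) unfolding U_def by blast
    then have qEF: "quot_le le E F" unfolding quot_le_def using e0(1) f01(1) by blast
    have qFE: "\<not> quot_le le F E" unfolding quot_le_def using le_FE by blast
    have qEE: "quot_le le E E" unfolding quot_le_def using e0(1) refl EP by blast
    have qFF: "quot_le le F F" unfolding quot_le_def using f01(1) refl FP by blast
    show ?thesis using qEF qFE qEE qFF EneF unfolding h_def C2_le_def by auto
  qed
  ultimately show "poset_iso (pretract_carrier P le W W_le 2) (quot_le le) C2 C2_le"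
    unfolding carr poset_iso_def by blast
next
  show "\<not> poset_iso P le C2 C2_le"
  proof
    assume "poset_iso P le C2 C2_le"
    then obtain h where "bij_betw h P C2" unfolding poset_iso_def by blast
    then have "card P = 2" using bij_betw_same_card by (fastforce simp: C2_def)
    moreover have "card F \<le> card P" using card_mono[OF fin] PEF by blast
    ultimately show False using cF by simp
  qed
qed

end

theorem mainTheorem11:
  fixes P :: "'a set" and le :: "'a \<Rightarrow> 'a \<Rightarrow> bool"
  assumes "finite P" and "poset P le"
  shows "(poset_iso (pretract_carrier P le W W_le 2) (quot_le le) C2 C2_le
           \<and> \<not> poset_iso P le C2 C2_le)
         \<longleftrightarrow> poset_iso P le S3_12 S3_12_le"
proof
  assume h: "poset_iso (pretract_carrier P le W W_le 2) (quot_le le) C2 C2_le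
           \<and> \<not> poset_iso P le C2 C2_le"
  obtain E F where b: "bip P le E F"
    "\<And>x y. x \<in> E \<Longrightarrow> y \<in> E \<Longrightarrow> psymrel P le W W_le 2 x y"
    "\<And>x y. x \<in> F \<Longrightarrow> y \<in> F \<Longrightarrow> psymrel P le W W_le 2 x y"
    "E \<noteq> {}" "F \<noteq> {}"
    using quot_setup[OF assms] h by blast
  show "poset_iso P le S3_12 S3_12_le"
    using bip.forward_core[OF b(1) b(2) b(3) b(4) b(5)] h by blast
next
  assume "poset_iso P le S3_12 S3_12_le"
  then obtain E F where "std P le E F" using iso_std[OF assms(2)] by blast
  then show "poset_iso (pretract_carrier P le W W_le 2) (quot_le le) C2 C2_le
           \<and> \<not> poset_iso P le C2 C2_le"
    by (rule std.backward)
qed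


end
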